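(* Let $H(y)$, $y=(y_1,y_2)$, be of the form $H(y)=G(h)+y_i\Delta(y_i,h)$ with $h=y_1y_2$, for some $i\in\{1,2\}$, where $G$ and $\Delta$ are analytic germs and $G(h)=\lambda h+O(h^2)$ with $\lambda\ne0$. Then $(G,\omega)$ is the Birkhoff–Siegel normal form of the pair $(H,\omega)$, $\omega=dy_1\wedge dy_2$; that is, there exist analytic coordinates $u=(u_1,u_2)$ in which $\omega=du_1\wedge du_2$ and $H=G(u_1u_2)$.
   Context: For a germ $H:\mathbb C^2\to\mathbb C$ with a non-degenerate critical point and a symplectic form $\omega$, the Birkhoff–Siegel normal form of $(H,\omega)$ is the pair $(G_H,\omega)$ where $G_H$ is a germ of one variable such that in some analytic coordinates $u$, $\omega=du_1\wedge du_2$ and $H=G_H(u_1u_2)$; $G_H$ is unique up to the involution $G_H(h)\mapsto G_H(-h)$. *)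

theory Defs
  imports "HOL-Analysis.Analysis"
begin

definition holo2 :: "(complex \<times> complex \<Rightarrow> complex) \<Rightarrow> (complex \<times> complex) set \<Rightarrow> bool" where
  "holo2 f S \<longleftrightarrow> (\<forall>z\<in>S. \<exists>a b. (f has_derivative (\<lambda>(x, y). a * x + b * y)) (at z))"

definition analytic_germ2 :: "(complex \<times> complex \<Rightarrow> complex) \<Rightarrow> bool" where
  "analytic_germ2 f \<longleftrightarrow> (\<exists>r>0. holo2 f (ball 0 r))"

text \<open>Analytic coordinates u = (u1, u2) on an open set U in which
  omega = dy1 /\ dy2 becomes du1 /\ du2: u is injective, holomorphic with
  complex-linear differential, and its Jacobian determinant is 1 everywhere
  (the pull-back of du1 /\ du2 is det(Du) dy1 /\ dy2).\<close>
definition symplectic_chart ::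
  "(complex \<times> complex \<Rightarrow> complex \<times> complex) \<Rightarrow> (complex \<times> complex) set \<Rightarrow> bool" where
  "symplectic_chart u U \<longleftrightarrow> open U \<and> inj_on u U \<and>
     (\<forall>z\<in>U. \<exists>a b c d. (u has_derivative (\<lambda>(x, y). (a * x + b * y, c * x + d * y))) (at z)
                      \<and> a * d - b * c = 1)"

end

theory Submission
  imports Defs "HOL-Complex_Analysis.Complex_Analysis"
begin

definition sh :: "(complex \<times> complex \<Rightarrow> complex) \<Rightarrow> (complex \<times> complex) set \<Rightarrow> bool" where
  "sh f S \<longleftrightarrow> open S \<and> continuous_on S f \<and>
     (\<forall>z w. (z, w) \<in> S \<longrightarrow> (\<lambda>z'. f (z', w)) field_differentiable at z
                          \<and> (\<lambda>w'. f (z, w')) field_differentiable at w)"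

definition D1 :: "(complex \<times> complex \<Rightarrow> complex) \<Rightarrow> complex \<times> complex \<Rightarrow> complex" where
  "D1 f p = deriv (\<lambda>z. f (z, snd p)) (fst p)"

definition D2 :: "(complex \<times> complex \<Rightarrow> complex) \<Rightarrow> complex \<times> complex \<Rightarrow> complex" where
  "D2 f p = deriv (\<lambda>w. f (fst p, w)) (snd p)"

lemma polydisc_in_open:
  fixes p :: "complex \<times> complex"
  assumes "open S" "p \<in> S"
  obtains r where "r > 0" "cball (fst p) r \<times> cball (snd p) r \<subseteq> S"
proof -
  obtain e where e: "e > 0" "ball p e \<subseteq> S" using assms open_contains_ball by blast
  show ?thesis
  proof
    show "e/3 > 0" using e by simp
    show "cball (fst p) (e/3) \<times> cball (snd p) (e/3) \<subseteq> S"
    proof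
      fix q assume q: "q \<in> cball (fst p) (e/3) \<times> cball (snd p) (e/3)"
      have "dist p q \<le> dist (fst p) (fst q) + dist (snd p) (snd q)"
        unfolding dist_norm
        using norm_Pair_le[of "fst p - fst q" "snd p - snd q"]
        by (metis fst_diff snd_diff prod.collapse)
      also have "\<dots> \<le> e/3 + e/3" using q by (auto simp: mem_cball)
      finally have "dist p q < e" using e by simp
      then show "q \<in> S" using e by auto
    qed
  qed
qed

lemma taylor1_bound:
  fixes \<phi> :: "complex \<Rightarrow> complex"
  assumes hol: "\<phi> holomorphic_on ball c (2*r)" and r: "r > 0"
    and M: "\<And>\<xi>. \<xi> \<in> ball c (2*r) \<Longrightarrow> norm (\<phi> \<xi>) \<le> M"
    and w: "w \<in> cball c r" and b: "norm b \<le> r/2"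
  shows "norm (\<phi> (w+b) - \<phi> w - deriv \<phi> w * b) \<le> (32*M/r^2) * (norm b)^2"
proof -
  define C where "C = 32*M/r^2"
  have holD: "deriv \<phi> holomorphic_on ball c (2*r)"
    by (simp add: hol holomorphic_deriv)
  have d2: "norm (deriv (deriv \<phi>) \<xi>) \<le> C" if \<xi>: "\<xi> \<in> cball c (3*r/2)" for \<xi>
  proof -
    have sub: "cball \<xi> (r/4) \<subseteq> ball c (2*r)"
    proof
      fix x assume "x \<in> cball \<xi> (r/4)"
      then have "dist c x \<le> dist c \<xi> + dist \<xi> x" "dist \<xi> x \<le> r/4" "dist c \<xi> \<le> 3*r/2"
        using \<xi> dist_triangle by (auto simp: mem_cball)
      then show "x \<in> ball c (2*r)" using r by (auto simp: mem_ball)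
    qed
    have "norm ((deriv ^^ 2) \<phi> \<xi>) \<le> fact 2 * M / (r/4)^2"
    proof (rule Cauchy_inequality)
      show "\<phi> holomorphic_on ball \<xi> (r/4)"
        using hol sub ball_subset_cball holomorphic_on_subset by blast
      show "continuous_on (cball \<xi> (r/4)) \<phi>"
        using hol sub holomorphic_on_imp_continuous_on holomorphic_on_subset by blast
      show "r/4 > 0" using r by simp
      fix x assume "norm (\<xi> - x) = r/4"
      then have "x \<in> cball \<xi> (r/4)" by (simp add: dist_norm mem_cball)
      then show "norm (\<phi> x) \<le> M" using sub M by blast
    qed
    also have "\<dots> = C" by (simp add: C_def power2_eq_square field_simps)
    finally show ?thesis by (simp add: numeral_2_eq_2)
  qed
  have subw: "cball w (norm b) \<subseteq> cball c (3*r/2)"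
  proof
    fix x assume "x \<in> cball w (norm b)"
    then have "dist c x \<le> dist c w + dist w x" "dist w x \<le> norm b" "dist c w \<le> r"
      using w dist_triangle by (auto simp: mem_cball)
    then show "x \<in> cball c (3*r/2)" using b by (auto simp: mem_cball)
  qed
  have subb: "cball c (3*r/2) \<subseteq> ball c (2*r)" using r by (auto simp: mem_cball mem_ball)
  have step1: "norm (deriv \<phi> x - deriv \<phi> w) \<le> C * norm (x - w)" if x: "x \<in> cball w (norm b)" for x
  proof (rule field_differentiable_bound[of "cball w (norm b)" "deriv \<phi>" "deriv (deriv \<phi>)" C x w])
    show "convex (cball w (norm b))" by simp
    fix z assume z: "z \<in> cball w (norm b)"
    then have "z \<in> ball c (2*r)" using subw subb by blast
    then show "(deriv \<phi> has_field_derivative deriv (deriv \<phi>) z) (at z within cball w (norm b))"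
      by (meson holD holomorphic_derivI open_ball)
    show "norm (deriv (deriv \<phi>) z) \<le> C" using d2 z subw by blast
  qed (use x in auto)
  define \<psi> where "\<psi> = (\<lambda>x. \<phi> x - deriv \<phi> w * x)"
  have "norm (\<psi> (w+b) - \<psi> w) \<le> (C * norm b) * norm (w + b - w)"
  proof (rule field_differentiable_bound[of "cball w (norm b)" \<psi> "\<lambda>x. deriv \<phi> x - deriv \<phi> w"])
    show "convex (cball w (norm b))" by simp
    fix z assume z: "z \<in> cball w (norm b)"
    then have zz: "z \<in> ball c (2*r)" using subw subb by blast
    have "(\<phi> has_field_derivative deriv \<phi> z) (at z within cball w (norm b))"
      by (meson zz hol holomorphic_derivI open_ball)
    then show "(\<psi> has_field_derivative deriv \<phi> z - deriv \<phi> w) (at z within cball w (norm b))"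
      unfolding \<psi>_def by (auto intro!: derivative_eq_intros)
    have "norm (deriv \<phi> z - deriv \<phi> w) \<le> C * norm (z - w)" using step1 z by blast
    also have "\<dots> \<le> C * norm b"
      using z r by (intro mult_left_mono) (auto simp: C_def dist_norm norm_minus_commute mem_cball
          intro!: divide_nonneg_pos order_trans[OF _ M[of c]])
    finally show "norm (deriv \<phi> z - deriv \<phi> w) \<le> C * norm b" .
  qed (auto simp: dist_norm mem_cball)
  then show ?thesis
    by (simp add: \<psi>_def C_def power2_eq_square algebra_simps)
qed

lemma sh_local:
  assumes "sh f S" "(z1, w1) \<in> S"
  obtains r M where "r > 0" "M > 0" "cball z1 (2*r) \<times> cball w1 (2*r) \<subseteq> S"
    "\<And>z w. z \<in> cball z1 (2*r) \<Longrightarrow> w \<in> cball w1 (2*r) \<Longrightarrow> norm (f (z, w)) \<le> M"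
proof -
  from assms have "open S" "continuous_on S f" by (auto simp: sh_def)
  obtain r0 where r0: "r0 > 0" "cball z1 r0 \<times> cball w1 r0 \<subseteq> S"
    using polydisc_in_open[OF \<open>open S\<close> assms(2)] by auto
  define K where "K = cball z1 r0 \<times> cball w1 r0"
  have "compact K" unfolding K_def by (simp add: compact_Times)
  moreover have "continuous_on K f"
    using \<open>continuous_on S f\<close> r0 continuous_on_subset K_def by blast
  ultimately have "compact (f ` K)" using compact_continuous_image by blast
  then obtain B where B: "B > 0" "\<And>x. x \<in> f ` K \<Longrightarrow> norm x \<le> B"
    using compact_imp_bounded bounded_pos by metis
  show ?thesis
  proof
    show "r0/2 > 0" "B > 0" using r0 B by auto
    show "cball z1 (2*(r0/2)) \<times> cball w1 (2*(r0/2)) \<subseteq> S" using r0 by simp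
    fix z w assume "z \<in> cball z1 (2*(r0/2))" "w \<in> cball w1 (2*(r0/2))"
    then have "(z, w) \<in> K" by (simp add: K_def)
    then show "norm (f (z, w)) \<le> B" using B by blast
  qed
qed

lemma sh_slice2_holo:
  assumes "sh f S" "{z} \<times> T \<subseteq> S" "open T"
  shows "(\<lambda>w. f (z, w)) holomorphic_on T"
  using assms unfolding sh_def holomorphic_on_def
  by (meson field_differentiable_at_within mem_Sigma_iff singletonI subsetD)

lemma sh_slice1_holo:
  assumes "sh f S" "T \<times> {w} \<subseteq> S" "open T"
  shows "(\<lambda>z. f (z, w)) holomorphic_on T"
  using assms unfolding sh_def holomorphic_on_def
  by (meson field_differentiable_at_within mem_Sigma_iff singletonI subsetD)

lemma sh_taylor2:
  assumes sh: "sh f S" and r: "r > 0" and sub: "cball z1 (2*r) \<times> cball w1 (2*r) \<subseteq> S"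
    and M: "\<And>z w. z \<in> cball z1 (2*r) \<Longrightarrow> w \<in> cball w1 (2*r) \<Longrightarrow> norm (f (z, w)) \<le> M"
    and z: "z \<in> cball z1 (2*r)" and w: "w \<in> cball w1 r" and b: "norm b \<le> r/2"
  shows "norm (f (z, w+b) - f (z, w) - D2 f (z, w) * b) \<le> (32*M/r^2) * (norm b)^2"
proof -
  have "(\<lambda>w. f (z, w)) holomorphic_on ball w1 (2*r)"
    by (rule sh_slice2_holo[OF sh]) (use sub z ball_subset_cball in auto)
  from taylor1_bound[OF this r _ w b, of M] M z ball_subset_cball
  show ?thesis by (auto simp: D2_def)
qed

lemma sh_D2_local:
  assumes sh: "sh f S" and p: "(z1, w1) \<in> S"
  shows "isCont (D2 f) (z1, w1)" "(\<lambda>z. D2 f (z, w1)) field_differentiable at z1"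
        "(\<lambda>w. D2 f (z1, w)) field_differentiable at w1"
proof -
  obtain r M where r: "r > 0" "M > 0" and sub: "cball z1 (2*r) \<times> cball w1 (2*r) \<subseteq> S"
    and M: "\<And>z w. z \<in> cball z1 (2*r) \<Longrightarrow> w \<in> cball w1 (2*r) \<Longrightarrow> norm (f (z, w)) \<le> M"
    using sh_local[OF sh p] by metis
  define C where "C = 32*M/r^2"
  have C: "C > 0" using r by (simp add: C_def)
  define K where "K = cball z1 r \<times> cball w1 r"
  define q where "q = (\<lambda>b p. (f (fst p, snd p + b) - f p) / b)"
  have contf: "continuous_on S f" using sh by (simp add: sh_def)
  have ul: "uniform_limit K q (D2 f) (at 0)"
    unfolding uniform_limit_iff
  proof (intro allI impI)
    fix e :: real assume e: "e > 0"
    show "\<forall>\<^sub>F b in at 0. \<forall>x\<in>K. dist (q b x) (D2 f x) < e"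
      unfolding eventually_at
    proof (intro exI[of _ "min (r/2) (e/(2*C))"] conjI allI impI ballI)
      show "0 < min (r/2) (e/(2*C))" using r e C by simp
      fix b :: complex and x assume b: "b \<noteq> 0 \<and> dist b 0 < min (r/2) (e/(2*C))"
        and x: "x \<in> K"
      obtain z w where xzw: "x = (z, w)" by fastforce
      have bnz: "b \<noteq> 0" and bn: "norm b \<le> r/2" "norm b < e/(2*C)" using b by auto
      have zz: "z \<in> cball z1 (2*r)" "w \<in> cball w1 r" using x r by (auto simp: K_def xzw mem_cball)
      have T: "norm (f (z, w+b) - f (z, w) - D2 f (z, w) * b) \<le> C * (norm b)^2"
        using sh_taylor2[OF sh r(1) sub M zz bn(1)] by (simp add: C_def)
      have "q b x - D2 f x = (f (z, w+b) - f (z, w) - D2 f (z, w) * b) / b"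
        using bnz by (simp add: q_def xzw field_simps)
      then have "dist (q b x) (D2 f x) = norm (f (z, w+b) - f (z, w) - D2 f (z, w) * b) / norm b"
        by (simp add: dist_norm norm_divide)
      also have "\<dots> \<le> C * (norm b)^2 / norm b"
        using T bnz by (simp add: divide_right_mono)
      also have "\<dots> = C * norm b" using bnz by (simp add: power2_eq_square)
      also have "\<dots> < C * (e/(2*C))" by (rule mult_strict_left_mono[OF bn(2) C])
      also have "\<dots> < e" using C e by simp
      finally show "dist (q b x) (D2 f x) < e" .
    qed
  qed
  have evc: "\<forall>\<^sub>F b in at 0. continuous_on K (q b)"
    unfolding eventually_at
  proof (intro exI[of _ "r/2"] conjI allI impI ballI)
    show "r/2 > 0" using r by simp
    fix b :: complex assume b: "b \<noteq> 0 \<and> dist b 0 < r/2"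
    have img: "(\<lambda>p. (fst p, snd p + b)) ` K \<subseteq> S"
    proof
      fix y assume "y \<in> (\<lambda>p. (fst p, snd p + b)) ` K"
      then obtain z w where "y = (z, w + b)" "z \<in> cball z1 r" "w \<in> cball w1 r"
        by (auto simp: K_def)
      moreover have "dist w1 (w + b) \<le> dist w1 w + norm b"
        by (metis add_diff_cancel_left' dist_norm dist_triangle2 dist_commute)
      ultimately show "y \<in> S" using sub b r by (force simp: mem_cball)
    qed
    have KS: "K \<subseteq> S" using sub r by (auto simp: K_def mem_cball)
    have c1: "continuous_on K (\<lambda>p. f (fst p, snd p + b))"
      by (rule continuous_on_compose2[OF contf _ img]) (auto intro!: continuous_intros)
    have c2: "continuous_on K f" using contf KS continuous_on_subset by blast
    show "continuous_on K (q b)"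
      unfolding q_def using c1 c2 b by (auto intro!: continuous_intros)
  qed
  have contK: "continuous_on K (D2 f)"
    by (rule uniform_limit_theorem[OF evc ul]) simp
  have "(z1, w1) \<in> interior K"
  proof -
    have "(z1, w1) \<in> ball z1 r \<times> ball w1 r" "open (ball z1 r \<times> ball w1 r)"
         "ball z1 r \<times> ball w1 r \<subseteq> K"
      using r by (auto simp: K_def open_Times)
    then show ?thesis by (meson interior_maximal subsetD)
  qed
  then show "isCont (D2 f) (z1, w1)" using contK continuous_on_interior by blast
  have ul1: "uniform_limit (cball z1 r) (\<lambda>b z. q b (z, w1)) (\<lambda>z. D2 f (z, w1)) (at 0)"
    using ul r unfolding uniform_limit_iff K_def by (fastforce elim!: eventually_mono)
  have ev1: "\<forall>\<^sub>F b in at 0. continuous_on (cball z1 r) (\<lambda>z. q b (z, w1))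
        \<and> (\<lambda>z. q b (z, w1)) holomorphic_on ball z1 r"
    unfolding eventually_at
  proof (intro exI[of _ "r/2"] conjI allI impI ballI)
    show "r/2 > 0" using r by simp
    fix b :: complex assume b: "b \<noteq> 0 \<and> dist b 0 < r/2"
    have wb: "w1 + b \<in> ball w1 (2*r)" "w1 \<in> ball w1 (2*r)" using b r by (auto simp: dist_norm)
    have sub1: "ball z1 (2*r) \<times> {w1 + b} \<subseteq> S" "ball z1 (2*r) \<times> {w1} \<subseteq> S"
      using sub wb ball_subset_cball by (auto simp: mem_cball mem_ball)
    have h: "(\<lambda>z. q b (z, w1)) holomorphic_on ball z1 (2*r)"
      unfolding q_def using sh_slice1_holo[OF sh sub1(1)] sh_slice1_holo[OF sh sub1(2)] b
      by (auto intro!: holomorphic_intros)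
    have sb: "cball z1 r \<subseteq> ball z1 (2*r)" "ball z1 r \<subseteq> ball z1 (2*r)" using r by (auto simp: mem_cball mem_ball)
    show "continuous_on (cball z1 r) (\<lambda>z. q b (z, w1))"
      using h sb holomorphic_on_imp_continuous_on holomorphic_on_subset by blast
    show "(\<lambda>z. q b (z, w1)) holomorphic_on ball z1 r"
      using h sb holomorphic_on_subset by blast
  qed
  obtain "(\<lambda>z. D2 f (z, w1)) holomorphic_on ball z1 r"
    using holomorphic_uniform_limit[OF ev1 ul1] by auto
  then show "(\<lambda>z. D2 f (z, w1)) field_differentiable at z1"
    using r holomorphic_on_imp_differentiable_at by (metis centre_in_ball open_ball)
  have "(\<lambda>w. f (z1, w)) holomorphic_on ball w1 (2*r)"
    by (rule sh_slice2_holo[OF sh]) (use sub r ball_subset_cball in auto)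
  then have "deriv (\<lambda>w. f (z1, w)) holomorphic_on ball w1 (2*r)" by (simp add: holomorphic_deriv)
  then have "deriv (\<lambda>w. f (z1, w)) field_differentiable at w1"
    using r holomorphic_on_imp_differentiable_at by (metis centre_in_ball open_ball mult_pos_pos zero_less_numeral)
  then show "(\<lambda>w. D2 f (z1, w)) field_differentiable at w1" by (simp add: D2_def)
qed

definition swp :: "(complex \<times> complex \<Rightarrow> complex) \<Rightarrow> complex \<times> complex \<Rightarrow> complex" where
  "swp f = (\<lambda>p. f (snd p, fst p))"

lemma sh_swp:
  assumes "sh f S" shows "sh (swp f) ((\<lambda>p. (snd p, fst p)) -` S)"
proof -
  have o: "open S" and c: "continuous_on S f" using assms by (auto simp: sh_def)
  have "open ((\<lambda>p. (snd p, fst p)) -` S)"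
    by (rule continuous_open_vimage[OF o]) (auto intro!: continuous_intros)
  moreover have "continuous_on ((\<lambda>p. (snd p, fst p)) -` S) (swp f)"
    unfolding swp_def by (rule continuous_on_compose2[OF c]) (auto intro!: continuous_intros)
  ultimately show ?thesis using assms by (auto simp: sh_def swp_def)
qed

lemma D2_swp: "D2 (swp f) (w, z) = D1 f (z, w)"
  by (simp add: D1_def D2_def swp_def)

lemma D1_swp: "D1 (swp f) (w, z) = D2 f (z, w)"
  by (simp add: D1_def D2_def swp_def)

lemma sh_D1_local:
  assumes sh: "sh f S" and p: "(z1, w1) \<in> S"
  shows "isCont (D1 f) (z1, w1)" "(\<lambda>z. D1 f (z, w1)) field_differentiable at z1"
        "(\<lambda>w. D1 f (z1, w)) field_differentiable at w1"
proof -
  have sh': "sh (swp f) ((\<lambda>p. (snd p, fst p)) -` S)" by (rule sh_swp[OF sh])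
  have p': "(w1, z1) \<in> (\<lambda>p. (snd p, fst p)) -` S" using p by simp
  note L = sh_D2_local[OF sh' p']
  have eq: "D1 f = (\<lambda>p. D2 (swp f) (snd p, fst p))" by (auto simp: D2_swp)
  have "isCont (\<lambda>p. (snd p, fst p)) (z1, w1)" by (intro continuous_intros)
  from isCont_o2[OF this] L(1)
  have "isCont (\<lambda>p. D2 (swp f) (snd p, fst p)) (z1, w1)" by simp
  then show "isCont (D1 f) (z1, w1)" by (simp add: eq)
  show "(\<lambda>z. D1 f (z, w1)) field_differentiable at z1"
    using L(3) by (simp add: D2_swp)
  show "(\<lambda>w. D1 f (z1, w)) field_differentiable at w1"
    using L(2) by (simp add: D2_swp)
qed

lemma sh_D1: assumes "sh f S" shows "sh (D1 f) S"
  unfolding sh_def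
proof (intro conjI allI impI)
  show "open S" using assms by (simp add: sh_def)
  show "continuous_on S (D1 f)"
    by (rule continuous_at_imp_continuous_on) (metis sh_D1_local(1) prod.collapse assms)
  fix z w assume zw: "(z, w) \<in> S"
  show "(\<lambda>z'. D1 f (z', w)) field_differentiable at z" using sh_D1_local(2)[OF assms zw] .
  show "(\<lambda>w'. D1 f (z, w')) field_differentiable at w" using sh_D1_local(3)[OF assms zw] .
qed

lemma sh_D2: assumes "sh f S" shows "sh (D2 f) S"
  unfolding sh_def
proof (intro conjI allI impI)
  show "open S" using assms by (simp add: sh_def)
  show "continuous_on S (D2 f)"
    by (rule continuous_at_imp_continuous_on) (metis sh_D2_local(1) prod.collapse assms)
  fix z w assume zw: "(z, w) \<in> S"
  show "(\<lambda>z'. D2 f (z', w)) field_differentiable at z" using sh_D2_local(2)[OF assms zw] .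
  show "(\<lambda>w'. D2 f (z, w')) field_differentiable at w" using sh_D2_local(3)[OF assms zw] .
qed

lemma sh_has_derivative:
  assumes sh: "sh f S" and pS: "p \<in> S"
  shows "(f has_derivative (\<lambda>v. D1 f p * fst v + D2 f p * snd v)) (at p)"
proof -
  obtain z1 w1 where p: "p = (z1, w1)" by fastforce
  obtain r M where r: "r > 0" "M > 0" and sub: "cball z1 (2*r) \<times> cball w1 (2*r) \<subseteq> S"
    and M: "\<And>z w. z \<in> cball z1 (2*r) \<Longrightarrow> w \<in> cball w1 (2*r) \<Longrightarrow> norm (f (z, w)) \<le> M"
    using sh_local[OF sh pS[unfolded p]] by metis
  define C where "C = 32*M/r^2"
  have C: "C > 0" using r by (simp add: C_def)
  have cD2: "isCont (D2 f) p" using sh_D2_local(1)[OF sh pS[unfolded p]] p by simp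
  have "(\<lambda>z. f (z, w1)) field_differentiable at z1" using sh pS p by (auto simp: sh_def)
  then have "((\<lambda>z. f (z, w1)) has_field_derivative D1 f p) (at z1)"
    by (simp add: D1_def p DERIV_deriv_iff_field_differentiable)
  then have dz: "((\<lambda>z. f (z, w1)) has_derivative (\<lambda>h. D1 f p * h)) (at z1)"
    by (simp add: has_field_derivative_def)
  show ?thesis
    unfolding has_derivative_at_alt
  proof (intro conjI allI impI)
    show "bounded_linear (\<lambda>v. D1 f p * fst v + D2 f p * snd v)"
      by (auto intro!: bounded_linear_add bounded_linear_mult_right bounded_linear_compose[OF _ bounded_linear_fst]
                       bounded_linear_compose[OF _ bounded_linear_snd])
    fix e :: real assume e: "e > 0"
    obtain d1 where d1: "d1 > 0" "\<And>z. norm (z - z1) < d1 \<Longrightarrow>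
        norm (f (z, w1) - f (z1, w1) - D1 f p * (z - z1)) \<le> (e/3) * norm (z - z1)"
      using dz[unfolded has_derivative_at_alt] e by (meson divide_pos_pos zero_less_numeral)
    obtain d2 where d2: "d2 > 0" "\<And>x. dist x p < d2 \<Longrightarrow> dist (D2 f x) (D2 f p) < e/3"
      using cD2[unfolded continuous_at_eps_delta] e by (meson divide_pos_pos zero_less_numeral)
    define d where "d = min (min d1 d2) (min (r/2) (e/(3*C)))"
    have d: "d > 0" using d1 d2 r e C by (simp add: d_def)
    show "\<exists>d>0. \<forall>y. norm (y - p) < d \<longrightarrow>
        norm (f y - f p - (D1 f p * fst (y - p) + D2 f p * snd (y - p))) \<le> e * norm (y - p)"
    proof (intro exI[of _ d] conjI allI impI d)
      fix y assume y: "norm (y - p) < d"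
      obtain a b where yab: "y = (z1 + a, w1 + b)"
      proof
        show "y = (z1 + (fst y - z1), w1 + (snd y - w1))" by simp
      qed
      have nab: "norm (y - p) = norm (a, b)" by (simp add: yab p)
      have na: "norm a \<le> norm (y - p)" and nb: "norm b \<le> norm (y - p)"
        using nab norm_fst_le norm_snd_le by metis+
      have z: "z1 + a \<in> cball z1 (2*r)" using na y r by (auto simp: d_def mem_cball dist_norm)
      have w: "w1 \<in> cball w1 r" using r by simp
      have bb: "norm b \<le> r/2" using nb y by (simp add: d_def)
      have T1: "norm (f (z1+a, w1+b) - f (z1+a, w1) - D2 f (z1+a, w1) * b) \<le> C * (norm b)^2"
        using sh_taylor2[OF sh r(1) sub M z w bb] by (simp add: C_def)
      have "C * norm b \<le> C * (e/(3*C))"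
        using nb y C by (intro mult_left_mono) (auto simp: d_def)
      then have "C * norm b \<le> e/3" using C by simp
      then have T1': "norm (f (z1+a, w1+b) - f (z1+a, w1) - D2 f (z1+a, w1) * b) \<le> (e/3) * norm b"
      proof -
        have "C * (norm b)^2 = (C * norm b) * norm b" by (simp add: power2_eq_square)
        also have "\<dots> \<le> (e/3) * norm b" by (rule mult_right_mono[OF \<open>C * norm b \<le> e/3\<close>]) simp
        finally show ?thesis using T1 by linarith
      qed
      have "dist (z1+a, w1) p < d2" using na y by (simp add: p dist_norm d_def dist_Pair_Pair)
      then have "norm (D2 f (z1+a, w1) - D2 f p) \<le> e/3" using d2(2)[of "(z1+a, w1)"] by (simp add: dist_norm)
      then have T2: "norm ((D2 f (z1+a, w1) - D2 f p) * b) \<le> (e/3) * norm b"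
        unfolding norm_mult by (rule mult_right_mono) simp_all
      have T3: "norm (f (z1+a, w1) - f (z1, w1) - D1 f p * a) \<le> (e/3) * norm a"
        using d1(2)[of "z1 + a"] na y by (simp add: d_def)
      have "f y - f p - (D1 f p * fst (y - p) + D2 f p * snd (y - p))
          = (f (z1+a, w1+b) - f (z1+a, w1) - D2 f (z1+a, w1) * b)
            + (D2 f (z1+a, w1) - D2 f p) * b + (f (z1+a, w1) - f (z1, w1) - D1 f p * a)"
        by (simp add: yab p algebra_simps)
      then have "norm (f y - f p - (D1 f p * fst (y - p) + D2 f p * snd (y - p)))
          \<le> (e/3) * norm b + (e/3) * norm b + (e/3) * norm a"
        using T1' T2 T3 norm_triangle_le norm_triangle_ineq by (smt (verit))
      also have "\<dots> \<le> e * norm (y - p)"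
      proof -
        have "e * norm a \<le> e * norm (y - p)" "e * norm b \<le> e * norm (y - p)"
          using na nb e by (simp_all add: mult_left_mono)
        then show ?thesis by linarith
      qed
      finally show "norm (f y - f p - (D1 f p * fst (y - p) + D2 f p * snd (y - p))) \<le> e * norm (y - p)" .
    qed
  qed
qed

lemma shI:
  assumes "open S" "continuous_on S f"
    "\<And>z w. (z, w) \<in> S \<Longrightarrow> (\<lambda>z'. f (z', w)) field_differentiable at z"
    "\<And>z w. (z, w) \<in> S \<Longrightarrow> (\<lambda>w'. f (z, w')) field_differentiable at w"
  shows "sh f S"
  using assms by (auto simp: sh_def)

lemma shD:
  assumes "sh f S"
  shows "open S" "continuous_on S f"
    "\<And>z w. (z, w) \<in> S \<Longrightarrow> (\<lambda>z'. f (z', w)) field_differentiable at z"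
    "\<And>z w. (z, w) \<in> S \<Longrightarrow> (\<lambda>w'. f (z, w')) field_differentiable at w"
  using assms by (auto simp: sh_def)

lemma sh_subset: "sh f S \<Longrightarrow> open T \<Longrightarrow> T \<subseteq> S \<Longrightarrow> sh f T"
  unfolding sh_def by (meson continuous_on_subset subsetD)

lemma sh_const: "open S \<Longrightarrow> sh (\<lambda>p. c) S"
  by (rule shI) auto

lemma sh_fst: "open S \<Longrightarrow> sh fst S"
  by (rule shI) (auto intro!: continuous_intros field_differentiable_ident field_differentiable_const)

lemma sh_snd: "open S \<Longrightarrow> sh snd S"
  by (rule shI) (auto intro!: continuous_intros field_differentiable_ident field_differentiable_const)

lemma sh_add: "sh f S \<Longrightarrow> sh g S \<Longrightarrow> sh (\<lambda>p. f p + g p) S"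
  by (rule shI) (auto simp: sh_def intro!: continuous_intros field_differentiable_add)

lemma sh_diff: "sh f S \<Longrightarrow> sh g S \<Longrightarrow> sh (\<lambda>p. f p - g p) S"
  by (rule shI) (auto simp: sh_def intro!: continuous_intros field_differentiable_diff)

lemma sh_mult: "sh f S \<Longrightarrow> sh g S \<Longrightarrow> sh (\<lambda>p. f p * g p) S"
  by (rule shI) (auto simp: sh_def intro!: continuous_intros field_differentiable_mult)

lemma sh_divide: "sh f S \<Longrightarrow> sh g S \<Longrightarrow> (\<And>p. p \<in> S \<Longrightarrow> g p \<noteq> 0) \<Longrightarrow> sh (\<lambda>p. f p / g p) S"
  by (rule shI) (auto simp: sh_def intro!: continuous_intros field_differentiable_divide)

lemma sh_comp1:
  assumes "sh f S" "g holomorphic_on U" "open U" "\<And>p. p \<in> S \<Longrightarrow> f p \<in> U"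
  shows "sh (\<lambda>p. g (f p)) S"
proof (rule shI)
  show "open S" using assms(1) by (simp add: sh_def)
  have "continuous_on U g" using assms(2) holomorphic_on_imp_continuous_on by blast
  then show "continuous_on S (\<lambda>p. g (f p))"
    using assms(1,4) by (auto simp: sh_def intro!: continuous_on_compose2[of U g])
  fix z w assume zw: "(z, w) \<in> S"
  have gd: "g field_differentiable at (f (z, w))"
    using assms(2,3,4) zw holomorphic_on_imp_differentiable_at by blast
  show "(\<lambda>z'. g (f (z', w))) field_differentiable at z"
    using field_differentiable_compose[OF shD(3)[OF assms(1) zw] gd] by (simp add: o_def)
  show "(\<lambda>w'. g (f (z, w'))) field_differentiable at w"
    using field_differentiable_compose[OF shD(4)[OF assms(1) zw] gd] by (simp add: o_def)
qed

lemma sh_chain: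
  assumes sh: "sh F T" and g1: "(g1 has_field_derivative d1) (at z)"
    and g2: "(g2 has_field_derivative d2) (at z)" and T: "(g1 z, g2 z) \<in> T"
  shows "((\<lambda>z. F (g1 z, g2 z)) has_field_derivative
           (D1 F (g1 z, g2 z) * d1 + D2 F (g1 z, g2 z) * d2)) (at z)"
proof -
  have p: "((\<lambda>z. (g1 z, g2 z)) has_derivative (\<lambda>h. (d1 * h, d2 * h))) (at z)"
    using has_derivative_Pair[OF g1[unfolded has_field_derivative_def] g2[unfolded has_field_derivative_def]] .
  have "((\<lambda>z. F (g1 z, g2 z)) has_derivative
      (\<lambda>h. D1 F (g1 z, g2 z) * fst (d1 * h, d2 * h) + D2 F (g1 z, g2 z) * snd (d1 * h, d2 * h))) (at z)"
    by (rule has_derivative_compose[OF p sh_has_derivative[OF sh T]])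
  then show ?thesis
    unfolding has_field_derivative_def by (rule has_derivative_eq_rhs) (simp add: fun_eq_iff algebra_simps)
qed

lemma sh_comp2:
  assumes F: "sh F T" and f1: "sh f1 S" and f2: "sh f2 S" and T: "\<And>p. p \<in> S \<Longrightarrow> (f1 p, f2 p) \<in> T"
  shows "sh (\<lambda>p. F (f1 p, f2 p)) S"
proof (rule shI)
  show "open S" using f1 by (simp add: sh_def)
  have "continuous_on S (\<lambda>p. (f1 p, f2 p))" using f1 f2 by (auto simp: sh_def intro!: continuous_intros)
  then show "continuous_on S (\<lambda>p. F (f1 p, f2 p))"
    using F T by (auto simp: sh_def intro!: continuous_on_compose2[of T F])
  fix z w assume zw: "(z, w) \<in> S"
  have a1: "((\<lambda>z'. f1 (z', w)) has_field_derivative deriv (\<lambda>z'. f1 (z', w)) z) (at z)"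
    using shD(3)[OF f1 zw] by (simp add: DERIV_deriv_iff_field_differentiable)
  have a2: "((\<lambda>z'. f2 (z', w)) has_field_derivative deriv (\<lambda>z'. f2 (z', w)) z) (at z)"
    using shD(3)[OF f2 zw] by (simp add: DERIV_deriv_iff_field_differentiable)
  show "(\<lambda>z'. F (f1 (z', w), f2 (z', w))) field_differentiable at z"
    using sh_chain[OF F a1 a2] T[OF zw] field_differentiable_def by auto
  have b1: "((\<lambda>w'. f1 (z, w')) has_field_derivative deriv (\<lambda>w'. f1 (z, w')) w) (at w)"
    using shD(4)[OF f1 zw] by (simp add: DERIV_deriv_iff_field_differentiable)
  have b2: "((\<lambda>w'. f2 (z, w')) has_field_derivative deriv (\<lambda>w'. f2 (z, w')) w) (at w)"
    using shD(4)[OF f2 zw] by (simp add: DERIV_deriv_iff_field_differentiable)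
  show "(\<lambda>w'. F (f1 (z, w'), f2 (z, w'))) field_differentiable at w"
    using sh_chain[OF F b1 b2] T[OF zw] field_differentiable_def by auto
qed

lemma sh_D1_deriv:
  assumes "sh f S" "(z, w) \<in> S"
  shows "((\<lambda>z'. f (z', w)) has_field_derivative D1 f (z, w)) (at z)"
  using shD(3)[OF assms] by (simp add: D1_def DERIV_deriv_iff_field_differentiable)

lemma sh_D2_deriv:
  assumes "sh f S" "(z, w) \<in> S"
  shows "((\<lambda>w'. f (z, w')) has_field_derivative D2 f (z, w)) (at w)"
  using shD(4)[OF assms] by (simp add: D2_def DERIV_deriv_iff_field_differentiable)

lemma sh_from_deriv:
  assumes S: "open S" and d: "\<And>p. p \<in> S \<Longrightarrow> (f has_derivative (\<lambda>v. A p * fst v + B p * snd v)) (at p)"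
  shows "sh f S" "\<And>p. p \<in> S \<Longrightarrow> D1 f p = A p" "\<And>p. p \<in> S \<Longrightarrow> D2 f p = B p"
proof -
  have s1: "((\<lambda>z'. f (z', w)) has_field_derivative A (z, w)) (at z)" if "(z, w) \<in> S" for z w
  proof -
    have "((\<lambda>z'. (z', w)) has_derivative (\<lambda>h. (h, 0))) (at z)"
      by (auto intro!: derivative_eq_intros)
    from has_derivative_compose[OF this d[OF that]]
    show ?thesis unfolding has_field_derivative_def by (rule has_derivative_eq_rhs) (simp add: fun_eq_iff)
  qed
  have s2: "((\<lambda>w'. f (z, w')) has_field_derivative B (z, w)) (at w)" if "(z, w) \<in> S" for z w
  proof -
    have "((\<lambda>w'. (z, w')) has_derivative (\<lambda>h. (0, h))) (at w)"
      by (auto intro!: derivative_eq_intros)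
    from has_derivative_compose[OF this d[OF that]]
    show ?thesis unfolding has_field_derivative_def by (rule has_derivative_eq_rhs) (simp add: fun_eq_iff)
  qed
  show "sh f S"
  proof (rule shI[OF S])
    show "continuous_on S f"
      using d by (meson continuous_at_imp_continuous_on has_derivative_continuous)
  qed (use s1 s2 field_differentiable_def in blast)+
  show "D1 f p = A p" if "p \<in> S" for p
    using s1[of "fst p" "snd p"] that DERIV_imp_deriv by (simp add: D1_def)
  show "D2 f p = B p" if "p \<in> S" for p
    using s2[of "fst p" "snd p"] that DERIV_imp_deriv by (simp add: D2_def)
qed

definition PD :: "real \<Rightarrow> (complex \<times> complex) set" where
  "PD r = ball 0 r \<times> ball 0 r"

lemma open_PD [simp]: "open (PD r)"
  by (simp add: PD_def open_Times)

lemma mem_PD: "p \<in> PD r \<longleftrightarrow> norm (fst p) < r \<and> norm (snd p) < r"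
  by (cases p) (auto simp: PD_def)

lemma PD_scale:
  assumes "(x, k) \<in> PD r" "t \<in> {0..1::real}"
  shows "(of_real t * x, k) \<in> PD r"
proof -
  have "norm (of_real t * x) \<le> norm x"
    using assms(2) by (simp add: norm_mult mult_left_le_one_le)
  then show ?thesis using assms(1) by (auto simp: mem_PD)
qed

lemma PD_zero [simp]: "r > 0 \<Longrightarrow> (0, 0) \<in> PD r"
  by (simp add: mem_PD)

lemma sh_scale_deriv1:
  assumes sh: "sh \<Phi> (PD r)" and xk: "(x, k) \<in> PD r" and t: "t \<in> {0..1::real}"
  shows "((\<lambda>x. \<Phi> (of_real t * x, k)) has_field_derivative of_real t * D1 \<Phi> (of_real t * x, k)) (at x)"
proof -
  have "((\<lambda>x. \<Phi> (of_real t * x, k)) has_field_derivative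
           D1 \<Phi> (of_real t * x, k) * of_real t + D2 \<Phi> (of_real t * x, k) * 0) (at x)"
    by (rule sh_chain[OF sh]) (auto intro!: derivative_eq_intros PD_scale[OF xk t])
  then show ?thesis by (simp add: mult.commute)
qed

lemma sh_scale_deriv2:
  assumes sh: "sh \<Phi> (PD r)" and xk: "(x, k) \<in> PD r" and t: "t \<in> {0..1::real}"
  shows "((\<lambda>k. \<Phi> (of_real t * x, k)) has_field_derivative D2 \<Phi> (of_real t * x, k)) (at k)"
proof -
  have "((\<lambda>k. \<Phi> (of_real t * x, k)) has_field_derivative
           D1 \<Phi> (of_real t * x, k) * 0 + D2 \<Phi> (of_real t * x, k) * 1) (at k)"
    by (rule sh_chain[OF sh]) (auto intro!: derivative_eq_intros PD_scale[OF xk t])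
  then show ?thesis by simp
qed

lemma cont_scale:
  assumes c: "continuous_on (PD r) \<Phi>" and X: "\<And>y. y \<in> X \<Longrightarrow> (m1 y, m2 y) \<in> PD r"
    and m: "continuous_on X m1" "continuous_on X m2"
  shows "continuous_on X (\<lambda>y. \<Phi> (m1 y, m2 y))"
  by (rule continuous_on_compose2[OF c]) (use X m in \<open>auto intro!: continuous_intros\<close>)

lemma sh_int:
  assumes sh: "sh \<Phi> (PD r)"
  shows "sh (\<lambda>p. integral {0..1} (\<lambda>t. \<Phi> (of_real t * fst p, snd p))) (PD r)"
    and "\<And>x k. (x, k) \<in> PD r \<Longrightarrow> ((\<lambda>x. integral {0..1} (\<lambda>t. \<Phi> (of_real t * x, k))) has_field_derivative
               integral {0..1} (\<lambda>t. of_real t * D1 \<Phi> (of_real t * x, k))) (at x)"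
    and "\<And>x k. (x, k) \<in> PD r \<Longrightarrow> ((\<lambda>k. integral {0..1} (\<lambda>t. \<Phi> (of_real t * x, k))) has_field_derivative
               integral {0..1} (\<lambda>t. D2 \<Phi> (of_real t * x, k))) (at k)"
proof -
  have c0: "continuous_on (PD r) \<Phi>" using sh by (simp add: sh_def)
  have c1: "continuous_on (PD r) (D1 \<Phi>)" using sh_D1[OF sh] by (simp add: sh_def)
  have c2: "continuous_on (PD r) (D2 \<Phi>)" using sh_D2[OF sh] by (simp add: sh_def)
  have dx: "((\<lambda>x. integral {0..1} (\<lambda>t. \<Phi> (of_real t * x, k))) has_field_derivative
               integral {0..1} (\<lambda>t. of_real t * D1 \<Phi> (of_real t * x, k))) (at x)"
    if xk: "(x, k) \<in> PD r" for x k
  proof -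
    have k: "norm k < r" and x: "x \<in> ball 0 r" using xk by (auto simp: mem_PD)
    have inb: "(y, k) \<in> PD r" if "y \<in> ball 0 r" for y using that k by (simp add: mem_PD)
    have "((\<lambda>x. integral (cbox 0 1) (\<lambda>t. \<Phi> (of_real t * x, k))) has_field_derivative
               integral (cbox 0 1) (\<lambda>t. of_real t * D1 \<Phi> (of_real t * x, k))) (at x within ball 0 r)"
    proof (rule leibniz_rule_field_derivative)
      fix y :: complex and t :: real assume y: "y \<in> ball 0 r" and t: "t \<in> cbox 0 (1::real)"
      show "((\<lambda>x. \<Phi> (of_real t * x, k)) has_field_derivative of_real t * D1 \<Phi> (of_real t * y, k)) (at y within ball 0 r)"
        using sh_scale_deriv1[OF sh inb[OF y], of t] t has_field_derivative_at_within by auto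
    next
      fix y :: complex assume y: "y \<in> ball 0 r"
      have "continuous_on (cbox 0 1) (\<lambda>t. \<Phi> (of_real t * y, k))"
        by (rule cont_scale[OF c0]) (use PD_scale inb[OF y] in \<open>auto intro!: continuous_intros\<close>)
      then show "(\<lambda>t. \<Phi> (of_real t * y, k)) integrable_on cbox 0 1"
        by (rule integrable_continuous)
    next
      have "continuous_on (ball 0 r \<times> cbox 0 1) (\<lambda>z. of_real (snd z) * D1 \<Phi> (of_real (snd z) * fst z, k))"
        by (intro continuous_intros cont_scale[OF c1])
           (use PD_scale inb in \<open>auto intro!: continuous_intros\<close>)
      then show "continuous_on (ball 0 r \<times> cbox 0 1) (\<lambda>(x, t). of_real t * D1 \<Phi> (of_real t * x, k))"
        by (simp add: split_beta')
    qed (use x in auto)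
    then show ?thesis using at_within_open[OF x open_ball] by simp
  qed
  have dk: "((\<lambda>k. integral {0..1} (\<lambda>t. \<Phi> (of_real t * x, k))) has_field_derivative
               integral {0..1} (\<lambda>t. D2 \<Phi> (of_real t * x, k))) (at k)"
    if xk: "(x, k) \<in> PD r" for x k
  proof -
    have x: "norm x < r" and k: "k \<in> ball 0 r" using xk by (auto simp: mem_PD)
    have inb: "(x, y) \<in> PD r" if "y \<in> ball 0 r" for y using that x by (simp add: mem_PD)
    have "((\<lambda>k. integral (cbox 0 1) (\<lambda>t. \<Phi> (of_real t * x, k))) has_field_derivative
               integral (cbox 0 1) (\<lambda>t. D2 \<Phi> (of_real t * x, k))) (at k within ball 0 r)"
    proof (rule leibniz_rule_field_derivative)
      fix y :: complex and t :: real assume y: "y \<in> ball 0 r" and t: "t \<in> cbox 0 (1::real)"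
      show "((\<lambda>k. \<Phi> (of_real t * x, k)) has_field_derivative D2 \<Phi> (of_real t * x, y)) (at y within ball 0 r)"
        using sh_scale_deriv2[OF sh inb[OF y], of t] t has_field_derivative_at_within by auto
    next
      fix y :: complex assume y: "y \<in> ball 0 r"
      have "continuous_on (cbox 0 1) (\<lambda>t. \<Phi> (of_real t * x, y))"
        by (rule cont_scale[OF c0]) (use PD_scale inb[OF y] in \<open>auto intro!: continuous_intros\<close>)
      then show "(\<lambda>t. \<Phi> (of_real t * x, y)) integrable_on cbox 0 1"
        by (rule integrable_continuous)
    next
      have "continuous_on (ball 0 r \<times> cbox 0 1) (\<lambda>z. D2 \<Phi> (of_real (snd z) * x, fst z))"
        by (intro continuous_intros cont_scale[OF c2])
           (use PD_scale inb in \<open>auto intro!: continuous_intros\<close>)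
      then show "continuous_on (ball 0 r \<times> cbox 0 1) (\<lambda>(k, t). D2 \<Phi> (of_real t * x, k))"
        by (simp add: split_beta')
    qed (use k in auto)
    then show ?thesis using at_within_open[OF k open_ball] by simp
  qed
  show "sh (\<lambda>p. integral {0..1} (\<lambda>t. \<Phi> (of_real t * fst p, snd p))) (PD r)"
  proof (rule shI)
    have "continuous_on (PD r \<times> cbox 0 1) (\<lambda>z. \<Phi> (of_real (snd z) * fst (fst z), snd (fst z)))"
      by (rule cont_scale[OF c0]) (use PD_scale in \<open>auto intro!: continuous_intros\<close>)
    then have "continuous_on (PD r \<times> cbox 0 1) (\<lambda>(p, t). \<Phi> (of_real t * fst p, snd p))"
      by (simp add: split_beta')
    from integral_continuous_on_param[OF this]
    show "continuous_on (PD r) (\<lambda>p. integral {0..1} (\<lambda>t. \<Phi> (of_real t * fst p, snd p)))" by simp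
  next
    fix z w assume zw: "(z, w) \<in> PD r"
    show "(\<lambda>z'. integral {0..1} (\<lambda>t. \<Phi> (of_real t * fst (z', w), snd (z', w)))) field_differentiable at z"
      unfolding field_differentiable_def using dx[OF zw] by auto
    show "(\<lambda>w'. integral {0..1} (\<lambda>t. \<Phi> (of_real t * fst (z, w'), snd (z, w')))) field_differentiable at w"
      unfolding field_differentiable_def using dk[OF zw] by auto
  qed simp
  show "\<And>x k. (x, k) \<in> PD r \<Longrightarrow> ((\<lambda>x. integral {0..1} (\<lambda>t. \<Phi> (of_real t * x, k))) has_field_derivative
               integral {0..1} (\<lambda>t. of_real t * D1 \<Phi> (of_real t * x, k))) (at x)" by (rule dx)
  show "\<And>x k. (x, k) \<in> PD r \<Longrightarrow> ((\<lambda>k. integral {0..1} (\<lambda>t. \<Phi> (of_real t * x, k))) has_field_derivative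
               integral {0..1} (\<lambda>t. D2 \<Phi> (of_real t * x, k))) (at k)" by (rule dk)
qed

lemma sh_line_integral:
  assumes sh: "sh \<Phi> (PD r)" and xk: "(x, k) \<in> PD r"
  shows "\<Phi> (x, k) - \<Phi> (0, k) = x * integral {0..1} (\<lambda>t. D1 \<Phi> (of_real t * x, k))"
proof -
  have "((\<lambda>t. D1 \<Phi> (of_real t * x, k) * x) has_integral \<Phi> (of_real 1 * x, k) - \<Phi> (of_real 0 * x, k)) {0..1}"
  proof (rule fundamental_theorem_of_calculus)
    fix t :: real assume t: "t \<in> {0..1}"
    have "((\<lambda>z. \<Phi> (z * x, k)) has_field_derivative
             D1 \<Phi> (of_real t * x, k) * x + D2 \<Phi> (of_real t * x, k) * 0) (at (of_real t))"
      by (rule sh_chain[OF sh]) (auto intro!: derivative_eq_intros PD_scale[OF xk t])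
    then show "((\<lambda>t. \<Phi> (of_real t * x, k)) has_vector_derivative D1 \<Phi> (of_real t * x, k) * x) (at t within {0..1})"
      using has_vector_derivative_real_field by fastforce
  qed simp
  from integral_unique[OF this]
  have "integral {0..1} (\<lambda>t. D1 \<Phi> (of_real t * x, k) * x) = \<Phi> (x, k) - \<Phi> (0, k)"
    by (simp only: of_real_1 of_real_0 mult_1 mult_zero_left)
  then show ?thesis by (simp add: integral_mult_left mult.commute)
qed

lemma sh_primitive:
  assumes sh: "sh g (PD r)" and xk: "(x, k) \<in> PD r"
  shows "integral {0..1} (\<lambda>t. g (of_real t * x, k))
           + x * integral {0..1} (\<lambda>t. of_real t * D1 g (of_real t * x, k)) = g (x, k)"
proof -
  have c0: "continuous_on (PD r) g" using sh by (simp add: sh_def)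
  have c1: "continuous_on (PD r) (D1 g)" using sh_D1[OF sh] by (simp add: sh_def)
  have "((\<lambda>t. g (of_real t * x, k) + of_real t * (D1 g (of_real t * x, k) * x))
          has_integral (of_real 1 * g (of_real 1 * x, k) - of_real 0 * g (of_real 0 * x, k))) {0..1}"
  proof (rule fundamental_theorem_of_calculus)
    fix t :: real assume t: "t \<in> {0..1}"
    have "((\<lambda>z. g (z * x, k)) has_field_derivative
             D1 g (of_real t * x, k) * x + D2 g (of_real t * x, k) * 0) (at (of_real t))"
      by (rule sh_chain[OF sh]) (auto intro!: derivative_eq_intros PD_scale[OF xk t])
    then have "((\<lambda>z. z * g (z * x, k)) has_field_derivative
             1 * g (of_real t * x, k) + of_real t * (D1 g (of_real t * x, k) * x + D2 g (of_real t * x, k) * 0)) (at (of_real t))"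
      by (intro derivative_eq_intros) auto
    then show "((\<lambda>t. of_real t * g (of_real t * x, k)) has_vector_derivative
        g (of_real t * x, k) + of_real t * (D1 g (of_real t * x, k) * x)) (at t within {0..1})"
      using has_vector_derivative_real_field by fastforce
  qed simp
  from integral_unique[OF this]
  have I: "integral {0..1} (\<lambda>t. g (of_real t * x, k) + of_real t * (D1 g (of_real t * x, k) * x)) = g (x, k)"
    by (simp only: of_real_1 of_real_0 mult_1 mult_zero_left diff_zero)
  have i1: "(\<lambda>t. g (of_real t * x, k)) integrable_on {0..1}"
    by (rule integrable_continuous_interval, rule cont_scale[OF c0])
       (use PD_scale xk in \<open>auto intro!: continuous_intros\<close>)
  have i2: "(\<lambda>t. of_real t * D1 g (of_real t * x, k)) integrable_on {0..1}"
    by (rule integrable_continuous_interval, intro continuous_intros cont_scale[OF c1])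
       (use PD_scale xk in \<open>auto intro!: continuous_intros\<close>)
  have "integral {0..1} (\<lambda>t. g (of_real t * x, k) + of_real t * (D1 g (of_real t * x, k) * x))
      = integral {0..1} (\<lambda>t. g (of_real t * x, k)) + integral {0..1} (\<lambda>t. (of_real t * D1 g (of_real t * x, k)) * x)"
  proof -
    have i3: "(\<lambda>t. (of_real t * D1 g (of_real t * x, k)) * x) integrable_on {0..1}"
      by (rule integrable_continuous_interval, intro continuous_intros cont_scale[OF c1])
         (use PD_scale xk in \<open>auto intro!: continuous_intros\<close>)
    have "(\<lambda>t. g (of_real t * x, k) + of_real t * (D1 g (of_real t * x, k) * x))
        = (\<lambda>t. g (of_real t * x, k) + (of_real t * D1 g (of_real t * x, k)) * x)"
      by (simp add: algebra_simps)
    then show ?thesis using integral_add[OF i1 i3] by simp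
  qed
  also have "\<dots> = integral {0..1} (\<lambda>t. g (of_real t * x, k)) + x * integral {0..1} (\<lambda>t. of_real t * D1 g (of_real t * x, k))"
    by (simp add: integral_mult_left mult.commute)
  finally show ?thesis using I by simp
qed

definition Lm :: "complex \<Rightarrow> complex \<Rightarrow> complex \<Rightarrow> complex \<Rightarrow> complex \<times> complex \<Rightarrow> complex \<times> complex" where
  "Lm a b c d = (\<lambda>v. (a * fst v + b * snd v, c * fst v + d * snd v))"

lemma bounded_linear_Lm: "bounded_linear (Lm a b c d)"
  unfolding Lm_def
  by (intro bounded_linear_Pair bounded_linear_add bounded_linear_compose[OF bounded_linear_mult_right bounded_linear_fst]
      bounded_linear_compose[OF bounded_linear_mult_right bounded_linear_snd])

lemma Lm_inv_comp0:
  assumes D: "D \<noteq> 0" "D = a*d - b*c"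
  shows "Lm (d/D) (-(b/D)) (-(c/D)) (a/D) (Lm a b c d v) = v"
        "Lm a b c d (Lm (d/D) (-(b/D)) (-(c/D)) (a/D) v) = v"
proof -
  have e: "x * (a*d - b*c) / D = x" for x using D by simp
  have 1: "(d/D)*(a*x+b*y) + (-(b/D))*(c*x+d*y) = x" for x y
  proof -
    have "(d/D)*(a*x+b*y) + (-(b/D))*(c*x+d*y) = x * (a*d - b*c) / D" using D(1) by (simp add: field_simps)
    then show ?thesis using e by simp
  qed
  have 2: "(-(c/D))*(a*x+b*y) + (a/D)*(c*x+d*y) = y" for x y
  proof -
    have "(-(c/D))*(a*x+b*y) + (a/D)*(c*x+d*y) = y * (a*d - b*c) / D" using D(1) by (simp add: field_simps)
    then show ?thesis using e by simp
  qed
  have 3: "a*((d/D)*x + (-(b/D))*y) + b*((-(c/D))*x + (a/D)*y) = x" for x y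
  proof -
    have "a*((d/D)*x + (-(b/D))*y) + b*((-(c/D))*x + (a/D)*y) = x * (a*d - b*c) / D" using D(1) by (simp add: field_simps)
    then show ?thesis using e by simp
  qed
  have 4: "c*((d/D)*x + (-(b/D))*y) + d*((-(c/D))*x + (a/D)*y) = y" for x y
  proof -
    have "c*((d/D)*x + (-(b/D))*y) + d*((-(c/D))*x + (a/D)*y) = y * (a*d - b*c) / D" using D(1) by (simp add: field_simps)
    then show ?thesis using e by simp
  qed
  show "Lm (d/D) (-(b/D)) (-(c/D)) (a/D) (Lm a b c d v) = v"
    unfolding Lm_def using 1 2 by (simp add: prod_eq_iff)
  show "Lm a b c d (Lm (d/D) (-(b/D)) (-(c/D)) (a/D) v) = v"
    unfolding Lm_def using 3 4 by (simp add: prod_eq_iff)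
qed

lemma Lm_inv_comp:
  assumes "a*d - b*c \<noteq> 0"
  shows "Lm (d/(a*d - b*c)) (-(b/(a*d - b*c))) (-(c/(a*d - b*c))) (a/(a*d - b*c)) (Lm a b c d v) = v"
        "Lm a b c d (Lm (d/(a*d - b*c)) (-(b/(a*d - b*c))) (-(c/(a*d - b*c))) (a/(a*d - b*c)) v) = v"
  using Lm_inv_comp0[OF assms refl] by auto

lemma inv_Lm:
  assumes "a*d - b*c \<noteq> 0"
  shows "inv (Lm a b c d) = Lm (d/(a*d - b*c)) (-(b/(a*d - b*c))) (-(c/(a*d - b*c))) (a/(a*d - b*c))"
  by (rule inv_unique_comp) (use Lm_inv_comp[OF assms] in \<open>auto simp: fun_eq_iff\<close>)

lemma bij_Lm_det:
  assumes "bij (Lm a b c d)" shows "a*d - b*c \<noteq> 0"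
proof
  assume det: "a*d - b*c = 0"
  show False
  proof (cases "a = 0 \<and> b = 0")
    case True
    have "(1, 0) \<in> range (Lm a b c d)" using assms bij_is_surj by blast
    then show False using True by (auto simp: Lm_def)
  next
    case False
    have "Lm a b c d (b, -a) = Lm a b c d 0"
      using det by (auto simp: Lm_def algebra_simps)
    moreover have "(b, -a) \<noteq> 0" using False by (auto simp: prod_eq_iff)
    ultimately show False using assms bij_is_inj by (metis injD)
  qed
qed

lemma sh_pair_has_derivative:
  assumes "sh f1 S" "sh f2 S" "q \<in> S"
  shows "((\<lambda>q. (f1 q, f2 q)) has_derivative Lm (D1 f1 q) (D2 f1 q) (D1 f2 q) (D2 f2 q)) (at q)"
  using has_derivative_Pair[OF sh_has_derivative[OF assms(1,3)] sh_has_derivative[OF assms(2,3)]]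
  by (simp add: Lm_def)

lemma sh_ift:
  assumes f1: "sh f1 S" and f2: "sh f2 S" and p: "p \<in> S"
    and det: "D1 f1 p * D2 f2 p - D2 f1 p * D1 f2 p \<noteq> 0"
  obtains U V g where "open U" "U \<subseteq> S" "p \<in> U" "open V" "(f1 p, f2 p) \<in> V"
    "homeomorphism U V (\<lambda>q. (f1 q, f2 q)) g"
    "\<And>y. y \<in> V \<Longrightarrow> D1 f1 (g y) * D2 f2 (g y) - D2 f1 (g y) * D1 f2 (g y) \<noteq> 0"
    "\<And>y. y \<in> V \<Longrightarrow> (g has_derivative
        (let a = D1 f1 (g y); b = D2 f1 (g y); c = D1 f2 (g y); d = D2 f2 (g y); \<Delta> = a*d - b*c
         in Lm (d/\<Delta>) (-(b/\<Delta>)) (-(c/\<Delta>)) (a/\<Delta>))) (at y)"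
proof -
  define L where "L q = Lm (D1 f1 q) (D2 f1 q) (D1 f2 q) (D2 f2 q)" for q
  define f' where "f' q = Blinfun (L q)" for q
  have fa: "blinfun_apply (f' q) = L q" for q
    by (simp add: f'_def L_def bounded_linear_Blinfun_apply bounded_linear_Lm)
  have S: "open S" using f1 by (simp add: sh_def)
  have c11: "continuous_on S (D1 f1)" "continuous_on S (D2 f1)" "continuous_on S (D1 f2)" "continuous_on S (D2 f2)"
    using sh_D1[OF f1] sh_D2[OF f1] sh_D1[OF f2] sh_D2[OF f2] by (auto simp: sh_def)
  define \<Delta> where "\<Delta> = D1 f1 p * D2 f2 p - D2 f1 p * D1 f2 p"
  define invf where "invf = Blinfun (Lm (D2 f2 p/\<Delta>) (-(D2 f1 p/\<Delta>)) (-(D1 f2 p/\<Delta>)) (D1 f1 p/\<Delta>))"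
  have ia: "blinfun_apply invf = Lm (D2 f2 p/\<Delta>) (-(D2 f1 p/\<Delta>)) (-(D1 f2 p/\<Delta>)) (D1 f1 p/\<Delta>)"
    by (simp add: invf_def bounded_linear_Blinfun_apply bounded_linear_Lm)
  obtain U V g g' where UV: "open U" "U \<subseteq> S" "p \<in> U" "open V" "(\<lambda>q. (f1 q, f2 q)) p \<in> V"
      "homeomorphism U V (\<lambda>q. (f1 q, f2 q)) g"
      and gd: "\<And>y. y \<in> V \<Longrightarrow> (g has_derivative (g' y)) (at y)"
      and g'd: "\<And>y. y \<in> V \<Longrightarrow> g' y = inv (blinfun_apply (f'(g y)))"
      and bj: "\<And>y. y \<in> V \<Longrightarrow> bij (blinfun_apply (f'(g y)))"
  proof (rule inverse_function_theorem[OF S _ _ p, of "\<lambda>q. (f1 q, f2 q)" f' invf])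
    show "\<And>x. x \<in> S \<Longrightarrow> ((\<lambda>q. (f1 q, f2 q)) has_derivative blinfun_apply (f' x)) (at x)"
      unfolding fa L_def by (rule sh_pair_has_derivative[OF f1 f2])
    show "continuous_on S f'"
    proof (rule continuous_on_blinfun_componentwise)
      fix i :: "complex \<times> complex"
      show "continuous_on S (\<lambda>x. blinfun_apply (f' x) i)"
        unfolding fa L_def Lm_def using c11 by (auto intro!: continuous_intros)
    qed
    show "invf o\<^sub>L f' p = id_blinfun"
      by (rule blinfun_eqI) (simp add: ia fa L_def \<Delta>_def Lm_inv_comp(1)[OF det])
  qed auto
  show ?thesis
  proof (rule that[OF UV])
    fix y assume y: "y \<in> V"
    have "bij (L (g y))" using bj[OF y] by (simp add: fa)
    then show dt: "D1 f1 (g y) * D2 f2 (g y) - D2 f1 (g y) * D1 f2 (g y) \<noteq> 0"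
      unfolding L_def by (rule bij_Lm_det)
    show "(g has_derivative
        (let a = D1 f1 (g y); b = D2 f1 (g y); c = D1 f2 (g y); d = D2 f2 (g y); \<Delta> = a*d - b*c
         in Lm (d/\<Delta>) (-(b/\<Delta>)) (-(c/\<Delta>)) (a/\<Delta>))) (at y)"
      using gd[OF y] g'd[OF y] inv_Lm[OF dt] by (simp add: fa L_def Let_def)
  qed
qed

lemma holo2_sh:
  assumes "holo2 f S" "open S" shows "sh f S"
proof -
  have "\<forall>p\<in>S. \<exists>ab. (f has_derivative (\<lambda>v. fst ab * fst v + snd ab * snd v)) (at p)"
  proof
    fix p assume "p \<in> S"
    then obtain a b where "(f has_derivative (\<lambda>(x, y). a * x + b * y)) (at p)"
      using assms(1) by (auto simp: holo2_def)
    then have "(f has_derivative (\<lambda>v. fst (a, b) * fst v + snd (a, b) * snd v)) (at p)"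
      by (simp add: split_beta')
    then show "\<exists>ab. (f has_derivative (\<lambda>v. fst ab * fst v + snd ab * snd v)) (at p)" by blast
  qed
  then obtain AB where "\<And>p. p \<in> S \<Longrightarrow> (f has_derivative (\<lambda>v. fst (AB p) * fst v + snd (AB p) * snd v)) (at p)"
    using bchoice[of S "\<lambda>p ab. (f has_derivative (\<lambda>v. fst ab * fst v + snd ab * snd v)) (at p)"] by auto
  then show ?thesis by (rule sh_from_deriv(1)[OF assms(2)])
qed

lemma PD_in_open:
  assumes "open T" "(0, 0) \<in> T"
  obtains r where "r > 0" "PD r \<subseteq> T"
proof -
  obtain r where r: "r > 0" "cball (fst (0::complex, 0::complex)) r \<times> cball (snd (0::complex, 0::complex)) r \<subseteq> T"
    using polydisc_in_open[OF assms] by blast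
  have "PD r \<subseteq> T" using r(2) by (auto simp: PD_def)
  then show ?thesis using r(1) that by blast
qed

lemma PD_sub_ball: "r > 0 \<Longrightarrow> PD (r/2) \<subseteq> ball 0 r"
proof
  fix p :: "complex \<times> complex" assume "r > 0" "p \<in> PD (r/2)"
  then have "norm (fst p) < r/2" "norm (snd p) < r/2" by (auto simp: mem_PD)
  moreover have "norm p \<le> norm (fst p) + norm (snd p)"
    using norm_Pair_le[of "fst p" "snd p"] by simp
  ultimately show "p \<in> ball 0 r" by simp
qed

lemma PD_mono: "r \<le> s \<Longrightarrow> PD r \<subseteq> PD s"
  by (auto simp: mem_PD)

lemma sh_snd_inv:
  assumes "open V" and gd: "\<And>y. y \<in> V \<Longrightarrow> (g has_derivative Lm a b (c y) (d y)) (at y)"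
  shows "sh (\<lambda>y. snd (g y)) V"
proof (rule sh_from_deriv(1)[OF assms(1)])
  fix y assume "y \<in> V"
  from has_derivative_snd[OF gd[OF this]]
  show "((\<lambda>y. snd (g y)) has_derivative (\<lambda>v. c y * fst v + d y * snd v)) (at y)"
    by (simp add: Lm_def)
qed

lemma one_var_inverse:
  fixes G :: "complex \<Rightarrow> complex"
  assumes G_an: "G analytic_on {0}" and G0: "G 0 = 0" and G1: "deriv G 0 \<noteq> 0"
  obtains \<rho> Gi where "\<rho> > 0" "G holomorphic_on ball 0 \<rho>" "open (G ` ball 0 \<rho>)" "Gi holomorphic_on G ` ball 0 \<rho>"
    "\<And>z. z \<in> ball 0 \<rho> \<Longrightarrow> Gi (G z) = z" "\<And>z. z \<in> G ` ball 0 \<rho> \<Longrightarrow> G (Gi z) = z" "0 \<in> G ` ball 0 \<rho>"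
proof -
  obtain \<rho>0 where \<rho>0: "\<rho>0 > 0" "G holomorphic_on ball 0 \<rho>0"
    using G_an unfolding analytic_on_def by blast
  obtain \<rho> where \<rho>: "\<rho> > 0" "ball (0::complex) \<rho> \<subseteq> ball 0 \<rho>0" "inj_on G (ball 0 \<rho>)"
  proof (rule has_complex_derivative_locally_injective[OF \<rho>0(2) _ open_ball G1])
    show "0 \<in> ball (0::complex) \<rho>0" using \<rho>0(1) by simp
  qed (rule that)
  have hol: "G holomorphic_on ball 0 \<rho>" using holomorphic_on_subset[OF \<rho>0(2) \<rho>(2)] .
  obtain Gi where Gi: "Gi holomorphic_on G ` ball 0 \<rho>" 
      and "\<And>z. z \<in> ball 0 \<rho> \<Longrightarrow> deriv G z * deriv Gi (G z) = 1" and Gi2: "\<And>z. z \<in> ball 0 \<rho> \<Longrightarrow> Gi (G z) = z"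
  proof (rule holomorphic_has_inverse[OF hol open_ball \<rho>(3)])
    fix g assume "g holomorphic_on G ` ball 0 \<rho>" "\<And>z. z \<in> ball 0 \<rho> \<Longrightarrow> deriv G z * deriv g (G z) = 1"
      "\<And>z. z \<in> ball 0 \<rho> \<Longrightarrow> g (G z) = z"
    then show thesis by (rule that)
  qed
  show ?thesis
  proof (rule that[OF \<rho>(1) hol _ Gi Gi2])
    show "open (G ` ball 0 \<rho>)" by (rule open_mapping_thm3[OF hol open_ball \<rho>(3)])
    show "G (Gi z) = z" if "z \<in> G ` ball 0 \<rho>" for z
    proof -
      from that obtain s where "s \<in> ball 0 \<rho>" "z = G s" by blast
      then show ?thesis using Gi2 by simp
    qed
    have "G 0 \<in> G ` ball 0 \<rho>" using \<rho>(1) by simp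
    then show "0 \<in> G ` ball 0 \<rho>" using G0 by simp
  qed
qed

lemma sh_snd_inv2:
  assumes "open V" and gd: "\<And>y. y \<in> V \<Longrightarrow> (g has_derivative Lm (a y) (b y) (c y) (d y)) (at y)"
  shows "sh (\<lambda>y. snd (g y)) V"
proof (rule sh_from_deriv(1)[OF assms(1)])
  fix y assume "y \<in> V"
  from has_derivative_snd[OF gd[OF this]]
  show "((\<lambda>y. snd (g y)) has_derivative (\<lambda>v. c y * fst v + d y * snd v)) (at y)"
    by (simp add: Lm_def)
qed

lemma Lm_case: "Lm a b c d = (\<lambda>(x, y). (a * x + b * y, c * x + d * y))"
  by (simp add: Lm_def fun_eq_iff split_beta)

lemma D1_fst [simp]: "D1 fst p = 1" by (simp add: D1_def)
lemma D2_fst [simp]: "D2 fst p = 0" by (simp add: D2_def)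

lemma det_alg:
  fixes y1 w w1 w2 a1 a2 A :: complex
  shows "(exp A + y1 * (exp A * (a1 + a2*(w + y1*w1)))) * (w2 * exp (-A) - w * (exp (-A) * (a2 * (y1*w2))))
         - (y1 * (exp A * (a2 * (y1 * w2)))) * (w1 * exp (-A) - w * (exp (-A) * (a1 + a2*(w + y1*w1))))
         = w2 * (1 + y1 * a1)"
proof -
  have e: "exp (-A) * exp A = 1" by (simp add: exp_minus_inverse mult.commute)
  have "(exp A + y1 * (exp A * (a1 + a2*(w + y1*w1)))) * (w2 * exp (-A) - w * (exp (-A) * (a2 * (y1*w2))))
         - (y1 * (exp A * (a2 * (y1 * w2)))) * (w1 * exp (-A) - w * (exp (-A) * (a1 + a2*(w + y1*w1))))
       = (exp (-A) * exp A) * (w2 * (1 + y1 * a1))"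
    by (simp add: algebra_simps)
  then show ?thesis using e by simp
qed

lemma main1:
  fixes H :: "complex \<times> complex \<Rightarrow> complex" and G :: "complex \<Rightarrow> complex"
    and \<Delta> :: "complex \<times> complex \<Rightarrow> complex"
  assumes G_an: "G analytic_on {0}" and G0: "G 0 = 0" and G1: "deriv G 0 \<noteq> 0"
    and D_an: "analytic_germ2 \<Delta>"
    and H_form: "\<exists>r>0. \<forall>y\<in>ball 0 r. H y = G (fst y * snd y) + fst y * \<Delta> (fst y, fst y * snd y)"
  shows "\<exists>U u. 0 \<in> U \<and> symplectic_chart u U \<and> (\<forall>y\<in>U. H y = G (fst (u y) * snd (u y)))"
proof -
  obtain rH where rH: "rH > 0" "\<And>y. y \<in> ball 0 rH \<Longrightarrow> H y = G (fst y * snd y) + fst y * \<Delta> (fst y, fst y * snd y)"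
    using H_form by blast
  obtain \<rho> Gi where \<rho>: "\<rho> > 0" and Ghol: "G holomorphic_on ball 0 \<rho>" and Oopen: "open (G ` ball 0 \<rho>)"
    and Gihol: "Gi holomorphic_on G ` ball 0 \<rho>" and GiG: "\<And>z. z \<in> ball 0 \<rho> \<Longrightarrow> Gi (G z) = z"
    and GGi: "\<And>z. z \<in> G ` ball 0 \<rho> \<Longrightarrow> G (Gi z) = z" and O0: "0 \<in> G ` ball 0 \<rho>"
    apply (rule one_var_inverse[OF G_an G0 G1])
    apply (rule that)
          apply assumption+
    done
  define Og where "Og = G ` ball 0 \<rho>"
  obtain r\<Delta> where r\<Delta>: "r\<Delta> > 0" "holo2 \<Delta> (ball 0 r\<Delta>)"
    using D_an unfolding analytic_germ2_def by blast
  have shD: "sh \<Delta> (ball 0 r\<Delta>)" by (rule holo2_sh[OF r\<Delta>(2) open_ball])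
  define r1 where "r1 = min (r\<Delta>/2) \<rho>"
  have r1: "r1 > 0" using r\<Delta> \<rho> by (simp add: r1_def)
  have PDr1: "PD r1 \<subseteq> ball 0 r\<Delta>"
  proof -
    have "PD r1 \<subseteq> PD (r\<Delta>/2)" by (rule PD_mono) (simp add: r1_def)
    then show ?thesis using PD_sub_ball[OF r\<Delta>(1)] by blast
  qed
  have shD1: "sh \<Delta> (PD r1)" by (rule sh_subset[OF shD open_PD PDr1])
  define \<phi> where "\<phi> p = G (snd p) + fst p * \<Delta> p" for p
  have sh\<phi>: "sh \<phi> (PD r1)"
  proof -
    have "sh (\<lambda>p. G (snd p)) (PD r1)"
      by (rule sh_comp1[OF sh_snd[OF open_PD] Ghol open_ball]) (auto simp: mem_PD r1_def)
    moreover have "sh (\<lambda>p. fst p * \<Delta> p) (PD r1)"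
      by (rule sh_mult[OF sh_fst[OF open_PD] shD1])
    ultimately show ?thesis unfolding \<phi>_def by (rule sh_add)
  qed
  have "open (PD r1 \<inter> \<phi> -` Og)"
  proof -
    have "continuous_on (PD r1) \<phi>" using sh\<phi> by (simp add: sh_def)
    then show ?thesis unfolding Og_def by (rule continuous_open_preimage[OF _ open_PD Oopen])
  qed
  moreover have "(0, 0) \<in> PD r1 \<inter> \<phi> -` Og"
  proof -
    have "\<phi> (0, 0) = 0" using G0 by (simp add: \<phi>_def)
    then show ?thesis using r1 O0 unfolding Og_def by simp
  qed
  ultimately obtain r0 where r0: "r0 > 0" "PD r0 \<subseteq> PD r1 \<inter> \<phi> -` Og"
    by (rule PD_in_open)
  have r0O: "\<phi> p \<in> Og" if "p \<in> PD r0" for p using r0 that by blast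
  have r0r1: "PD r0 \<subseteq> PD r1" using r0 by blast
  define Kf where "Kf p = Gi (\<phi> p)" for p
  have shK: "sh Kf (PD r0)"
    unfolding Kf_def
    by (rule sh_comp1[OF sh_subset[OF sh\<phi> open_PD r0r1] Gihol Oopen]) (use r0O Og_def in auto)
  have K0: "Kf (0, h) = h" if "(0, h) \<in> PD r0" for h
  proof -
    have "(0, h) \<in> PD r1" using that r0r1 by blast
    then have "norm h < \<rho>" by (auto simp: mem_PD r1_def)
    then show ?thesis using GiG by (simp add: Kf_def \<phi>_def)
  qed
  define E where "E p = integral {0..1} (\<lambda>t. D1 Kf (of_real t * fst p, snd p))" for p
  have Eeq: "E = (\<lambda>p. integral {0..1} (\<lambda>t. D1 Kf (of_real t * fst p, snd p)))"
    by (simp add: fun_eq_iff E_def)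
  have shE: "sh E (PD r0)" unfolding Eeq by (rule sh_int(1)[OF sh_D1[OF shK]])
  have KE: "Kf (x, h) = h + x * E (x, h)" if "(x, h) \<in> PD r0" for x h
  proof -
    have "(0, h) \<in> PD r0" using that r0(1) by (simp add: mem_PD)
    then have "Kf (x, h) - h = x * E (x, h)" using sh_line_integral[OF shK that] K0 by (simp add: E_def)
    then show ?thesis by (simp add: algebra_simps)
  qed
  define f2 where "f2 p = snd p + fst p * E p" for p
  have shf2: "sh f2 (PD r0)"
  proof -
    have "sh (\<lambda>p. snd p + fst p * E p) (PD r0)"
      by (rule sh_add[OF sh_snd[OF open_PD] sh_mult[OF sh_fst[OF open_PD] shE]])
    then show ?thesis by (simp add: f2_def[abs_def])
  qed
  have D2f2: "D2 f2 p = 1 + fst p * D2 E p" if "p \<in> PD r0" for p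
  proof -
    obtain x h where p: "p = (x, h)" by fastforce
    have "((\<lambda>w. f2 (x, w)) has_field_derivative 1 + x * D2 E (x, h)) (at h)"
      unfolding f2_def fst_conv snd_conv
      by (intro derivative_eq_intros) (use that p sh_D2_deriv[OF shE, of x h] in auto)
    then show ?thesis by (simp add: D2_def p DERIV_imp_deriv)
  qed
  have det0: "D1 fst (0, 0) * D2 f2 (0, 0) - D2 fst (0, 0) * D1 f2 (0, 0) \<noteq> 0"
    using D2f2[of "(0,0)"] r0(1) by simp
  obtain U V g where U: "open U" "U \<subseteq> PD r0" "(0, 0) \<in> U" and V: "open V" "(fst (0::complex, 0::complex), f2 (0, 0)) \<in> V"
    and hom: "homeomorphism U V (\<lambda>q. (fst q, f2 q)) g"
    and gdet: "\<And>y. y \<in> V \<Longrightarrow> D1 fst (g y) * D2 f2 (g y) - D2 fst (g y) * D1 f2 (g y) \<noteq> 0"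
    and gder: "\<And>y. y \<in> V \<Longrightarrow> (g has_derivative
        (let a = D1 fst (g y); b = D2 fst (g y); c = D1 f2 (g y); d = D2 f2 (g y); \<Delta> = a*d - b*c
         in Lm (d/\<Delta>) (-(b/\<Delta>)) (-(c/\<Delta>)) (a/\<Delta>))) (at y)"
    using sh_ift[OF sh_fst[OF open_PD] shf2 PD_zero[OF r0(1)] det0] by blast
  have V0: "(0, 0) \<in> V" using V(2) by (simp add: f2_def)
  have gU: "g y \<in> U" if "y \<in> V" for y using hom that unfolding homeomorphism_def by blast
  have Psig: "(fst (g y), f2 (g y)) = y" if "y \<in> V" for y using hom that unfolding homeomorphism_def by blast
  have gPsi: "g (fst q, f2 q) = q" if "q \<in> U" for q using hom that unfolding homeomorphism_def by blast
  have PsiV: "(fst q, f2 q) \<in> V" if "q \<in> U" for q using hom that unfolding homeomorphism_def by blast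
  have fstg: "fst (g y) = fst y" if "y \<in> V" for y using Psig[OF that] by (metis fst_conv)
  have gPD: "g y \<in> PD r0" if "y \<in> V" for y using gU[OF that] U(2) by blast
  have den: "1 + fst (g y) * D2 E (g y) \<noteq> 0" if "y \<in> V" for y
    using gdet[OF that] D2f2[OF gPD[OF that]] by simp
  define \<eta> where "\<eta> y = snd (g y)" for y
  have geta: "g y = (fst y, \<eta> y)" if "y \<in> V" for y using fstg[OF that] by (simp add: \<eta>_def prod_eq_iff)
  have sh\<eta>: "sh \<eta> V"
  proof -
    have "sh (\<lambda>y. snd (g y)) V"
    proof (rule sh_snd_inv2[OF V(1)])
      fix y assume "y \<in> V"
      from gder[OF this]
      show "(g has_derivative Lm (D2 f2 (g y) / (D1 fst (g y) * D2 f2 (g y) - D2 fst (g y) * D1 f2 (g y)))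
           (- (D2 fst (g y) / (D1 fst (g y) * D2 f2 (g y) - D2 fst (g y) * D1 f2 (g y))))
           (- (D1 f2 (g y) / (D1 fst (g y) * D2 f2 (g y) - D2 fst (g y) * D1 f2 (g y))))
           (D1 fst (g y) / (D1 fst (g y) * D2 f2 (g y) - D2 fst (g y) * D1 f2 (g y)))) (at y)"
        by (simp only: Let_def)
    qed
    then show ?thesis by (simp add: \<eta>_def[abs_def])
  qed
  have gPD': "(fst y, \<eta> y) \<in> PD r0" if "y \<in> V" for y using gPD[OF that] geta[OF that] by simp
  define gg where "gg y = (0 - D2 E (fst y, \<eta> y)) / (1 + fst y * D2 E (fst y, \<eta> y))" for y
  have shgg: "sh gg V"
  proof -
    have s1: "sh (\<lambda>y. D2 E (fst y, \<eta> y)) V"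
      by (rule sh_comp2[OF sh_D2[OF shE] sh_fst[OF V(1)] sh\<eta> gPD'])
    have s2: "sh (\<lambda>y. 1 + fst y * D2 E (fst y, \<eta> y)) V"
      by (rule sh_add[OF sh_const[OF V(1)] sh_mult[OF sh_fst[OF V(1)] s1]])
    have s3: "sh (\<lambda>y. 0 - D2 E (fst y, \<eta> y)) V"
      by (rule sh_diff[OF sh_const[OF V(1)] s1])
    have nz: "1 + fst y * D2 E (fst y, \<eta> y) \<noteq> 0" if "y \<in> V" for y
      using den[OF that] geta[OF that] by simp
    have "sh (\<lambda>y. (0 - D2 E (fst y, \<eta> y)) / (1 + fst y * D2 E (fst y, \<eta> y))) V"
      by (rule sh_divide[OF s3 s2 nz])
    then show ?thesis by (simp add: gg_def[abs_def])
  qed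
  obtain r2 where r2: "r2 > 0" "PD r2 \<subseteq> V" by (rule PD_in_open[OF V(1) V0])
  have shgg2: "sh gg (PD r2)" by (rule sh_subset[OF shgg open_PD r2(2)])
  define I where "I p = integral {0..1} (\<lambda>t. gg (of_real t * fst p, snd p))" for p
  have Ieq: "I = (\<lambda>p. integral {0..1} (\<lambda>t. gg (of_real t * fst p, snd p)))"
    by (simp add: fun_eq_iff I_def)
  have shI: "sh I (PD r2)" unfolding Ieq by (rule sh_int(1)[OF shgg2])
  define a where "a p = fst p * I p" for p
  have sha: "sh a (PD r2)"
  proof -
    have "sh (\<lambda>p. fst p * I p) (PD r2)" by (rule sh_mult[OF sh_fst[OF open_PD] shI])
    then show ?thesis by (simp add: a_def[abs_def])
  qed
  have D1a: "D1 a (x, k) = gg (x, k)" if xk: "(x, k) \<in> PD r2" for x k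
  proof -
    have "((\<lambda>x. x * I (x, k)) has_field_derivative
        1 * I (x, k) + x * integral {0..1} (\<lambda>t. of_real t * D1 gg (of_real t * x, k))) (at x)"
      by (intro derivative_eq_intros) (use sh_int(2)[OF shgg2 xk] in \<open>auto simp: I_def\<close>)
    moreover have "1 * I (x, k) + x * integral {0..1} (\<lambda>t. of_real t * D1 gg (of_real t * x, k)) = gg (x, k)"
      using sh_primitive[OF shgg2 xk] by (simp add: I_def)
    ultimately show ?thesis by (simp add: D1_def a_def DERIV_imp_deriv)
  qed
  define w where "w y = snd y + E (fst y, fst y * snd y)" for y
  define A where "A y = a (fst y, fst y * w y)" for y
  define u1 where "u1 y = fst y * exp (A y)" for y
  define u2 where "u2 y = w y * exp (- A y)" for y
  define m where "m y = (fst y, fst y * snd y)" for y :: "complex \<times> complex"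
  define W0 where "W0 = ball 0 rH \<inter> m -` U"
  have W0open: "open W0"
  proof -
    have meq: "m = (\<lambda>y. (fst y, fst y * snd y))" by (simp add: fun_eq_iff m_def)
    have "open (m -` U)" unfolding meq by (rule continuous_open_vimage[OF U(1)]) (auto intro!: continuous_intros)
    then show ?thesis by (simp add: W0_def open_Int)
  qed
  have mU: "m y \<in> U" if "y \<in> W0" for y using that by (simp add: W0_def)
  have mPD: "(fst y, fst y * snd y) \<in> PD r0" if "y \<in> W0" for y using mU[OF that] U(2) by (auto simp: m_def)
  have shw: "sh w W0"
  proof -
    have s1: "sh (\<lambda>p. fst p * snd p) W0" by (rule sh_mult[OF sh_fst[OF W0open] sh_snd[OF W0open]])
    have "sh (\<lambda>p. E (fst p, fst p * snd p)) W0"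
      by (rule sh_comp2[of E "PD r0" fst W0 "\<lambda>p. fst p * snd p", OF shE sh_fst[OF W0open] s1 mPD])
    from sh_add[OF sh_snd[OF W0open] this] show ?thesis by (simp add: w_def[abs_def])
  qed
  define W where "W = W0 \<inter> (\<lambda>y. (fst y, fst y * w y)) -` PD r2"
  have Wopen: "open W"
  proof -
    have "continuous_on W0 (\<lambda>y. (fst y, fst y * w y))"
      using shw by (auto simp: sh_def intro!: continuous_intros)
    then show ?thesis unfolding W_def by (rule continuous_open_preimage[OF _ W0open open_PD])
  qed
  have WW0: "W \<subseteq> W0" by (auto simp: W_def)
  have W0: "0 \<in> W" using rH(1) U(3) r2(1) by (simp add: W_def W0_def m_def)
  have Wa: "(fst y, fst y * w y) \<in> PD r2" if "y \<in> W" for y using that by (simp add: W_def)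
  have shA: "sh A W"
  proof -
    have s1: "sh (\<lambda>p. fst p * w p) W" by (rule sh_mult[OF sh_fst[OF Wopen] sh_subset[OF shw Wopen WW0]])
    have "sh (\<lambda>p. a (fst p, fst p * w p)) W"
      by (rule sh_comp2[of a "PD r2" fst W "\<lambda>p. fst p * w p", OF sha sh_fst[OF Wopen] s1 Wa])
    then show ?thesis by (simp add: A_def[abs_def])
  qed
  have shu1: "sh u1 W"
  proof -
    have "sh (\<lambda>p. exp (A p)) W" by (rule sh_comp1[OF shA holomorphic_on_exp open_UNIV]) simp
    from sh_mult[OF sh_fst[OF Wopen] this] show ?thesis by (simp add: u1_def[abs_def])
  qed
  have shu2: "sh u2 W"
  proof -
    have "sh (\<lambda>p. exp (0 - A p)) W"
      by (rule sh_comp1[OF sh_diff[OF sh_const[OF Wopen] shA] holomorphic_on_exp open_UNIV]) simp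
    then have "sh (\<lambda>p. exp (- A p)) W" by simp
    from sh_mult[OF sh_subset[OF shw Wopen WW0] this] show ?thesis by (simp add: u2_def[abs_def])
  qed
  have key: "H y = G (u1 y * u2 y) \<and> D1 u1 y * D2 u2 y - D2 u1 y * D1 u2 y = 1" if yW: "y \<in> W" for y
  proof -
    obtain y1 y2 where y: "y = (y1, y2)" by fastforce
    define q where "q = (y1, y1 * y2)"
    have yW0: "y \<in> W0" using yW WW0 by blast
    have qU: "q \<in> U" using mU[OF yW0] by (simp add: m_def q_def y)
    have qPD: "q \<in> PD r0" using qU U(2) by blast
    define wv where "wv = w y"
    have wv: "wv = y2 + E q" by (simp add: wv_def w_def y q_def)
    define k where "k = y1 * wv"
    define p2 where "p2 = (y1, k)"
    have p2PD: "p2 \<in> PD r2" using Wa[OF yW] by (simp add: p2_def k_def wv_def y)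
    have p2Psi: "p2 = (fst q, f2 q)" by (simp add: p2_def k_def wv f2_def q_def algebra_simps)
    have p2V: "p2 \<in> V" using PsiV[OF qU] p2Psi by simp
    have eta_p2: "\<eta> p2 = y1 * y2" using gPsi[OF qU] p2Psi by (simp add: \<eta>_def q_def)
    define E2 where "E2 = D2 E q"
    have denq: "1 + y1 * E2 \<noteq> 0"
      using den[OF p2V] gPsi[OF qU] p2Psi by (simp add: E2_def q_def)
    have a1: "D1 a p2 = (0 - E2) / (1 + y1 * E2)"
      using D1a[of y1 k] p2PD by (simp add: p2_def gg_def eta_p2[unfolded p2_def] E2_def q_def)
    have yb: "y \<in> ball 0 rH" using yW0 by (simp add: W0_def)
    have Hq: "H y = \<phi> q" using rH(2)[OF yb] by (simp add: \<phi>_def y q_def)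
    have Kq: "Kf q = y1 * wv" using KE[of y1 "y1 * y2"] qPD by (simp add: q_def wv algebra_simps)
    have u12: "u1 y * u2 y = y1 * wv"
      by (simp add: u1_def u2_def y wv_def[symmetric, unfolded y] exp_minus_inverse)
    have Hid: "H y = G (u1 y * u2 y)"
      using GGi[OF r0O[OF qPD, unfolded Og_def]] Kq u12 Hq by (simp add: Kf_def)
    define w1 where "w1 = D1 E q * 1 + D2 E q * y2"
    define w2 where "w2 = D1 E q * 0 + D2 E q * y1"
    have qq: "(y1, y1 * y2) \<in> PD r0" using qPD by (simp add: q_def)
    have dE1: "((\<lambda>z. E (z, z * y2)) has_field_derivative w1) (at y1)"
    proof -
      have "((\<lambda>z. z * y2) has_field_derivative y2) (at y1)" by (auto intro!: derivative_eq_intros)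
      from sh_chain[OF shE DERIV_ident this] qq show ?thesis by (simp add: w1_def q_def)
    qed
    have dE2: "((\<lambda>z. E (y1, y1 * z)) has_field_derivative w2) (at y2)"
    proof -
      have "((\<lambda>z. y1 * z) has_field_derivative y1) (at y2)" by (auto intro!: derivative_eq_intros)
      from sh_chain[OF shE DERIV_const[of y1] this] qq show ?thesis by (simp add: w2_def q_def)
    qed
    have dw1: "((\<lambda>z. w (z, y2)) has_field_derivative w1) (at y1)"
      using DERIV_add[OF DERIV_const[of y2] dE1] by (simp add: w_def)
    have dw2: "((\<lambda>z. w (y1, z)) has_field_derivative 1 + w2) (at y2)"
      using DERIV_add[OF DERIV_ident dE2] by (simp add: w_def)
    have wvy: "w (y1, y2) = wv" by (simp add: wv_def y)
    have p2w: "(y1, y1 * w (y1, y2)) = p2" by (simp add: p2_def k_def wvy)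
    define a1 where "a1 = D1 a p2"
    define a2 where "a2 = D2 a p2"
    define Av where "Av = A y"
    define A1 where "A1 = a1 + a2 * (wv + y1 * w1)"
    define A2 where "A2 = a2 * (y1 * (1 + w2))"
    have dA1: "((\<lambda>z. A (z, y2)) has_field_derivative A1) (at y1)"
    proof -
      have "((\<lambda>z. z * w (z, y2)) has_field_derivative 1 * w (y1, y2) + w1 * y1) (at y1)"
        by (rule DERIV_mult[OF DERIV_ident dw1])
      from sh_chain[OF sha DERIV_ident this] p2PD p2w
      have "((\<lambda>z. a (z, z * w (z, y2))) has_field_derivative a1 * 1 + a2 * (1 * wv + w1 * y1)) (at y1)"
        by (simp add: a1_def a2_def wvy)
      moreover have "(\<lambda>z. A (z, y2)) = (\<lambda>z. a (z, z * w (z, y2)))" by (simp add: A_def fun_eq_iff)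
      moreover have "a1 * 1 + a2 * (1 * wv + w1 * y1) = A1" by (simp add: A1_def algebra_simps)
      ultimately show ?thesis by (metis (no_types, lifting) DERIV_cong)
    qed
    have dA2: "((\<lambda>z. A (y1, z)) has_field_derivative A2) (at y2)"
    proof -
      have "((\<lambda>z. y1 * w (y1, z)) has_field_derivative 0 * w (y1, y2) + (1 + w2) * y1) (at y2)"
        by (rule DERIV_mult[OF DERIV_const[of y1] dw2])
      from sh_chain[OF sha DERIV_const[of y1] this] p2PD p2w
      have "((\<lambda>z. a (y1, y1 * w (y1, z))) has_field_derivative a1 * 0 + a2 * (0 * wv + (1 + w2) * y1)) (at y2)"
        by (simp add: a1_def a2_def wvy)
      moreover have "(\<lambda>z. A (y1, z)) = (\<lambda>z. a (y1, y1 * w (y1, z)))" by (simp add: A_def fun_eq_iff)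
      moreover have "a1 * 0 + a2 * (0 * wv + (1 + w2) * y1) = A2" by (simp add: A2_def algebra_simps)
      ultimately show ?thesis by (metis (no_types, lifting) DERIV_cong)
    qed
    have Avy: "A (y1, y2) = Av" by (simp add: Av_def y)
    have du11: "((\<lambda>z. u1 (z, y2)) has_field_derivative exp Av + y1 * (exp Av * A1)) (at y1)"
    proof -
      have "((\<lambda>z. exp (A (z, y2))) has_field_derivative exp (A (y1, y2)) * A1) (at y1)"
        by (rule DERIV_chain2[OF DERIV_exp dA1])
      from DERIV_mult[OF DERIV_ident this]
      have "((\<lambda>z. z * exp (A (z, y2))) has_field_derivative 1 * exp (A (y1, y2)) + exp (A (y1, y2)) * A1 * y1) (at y1)" .
      moreover have "(\<lambda>z. u1 (z, y2)) = (\<lambda>z. z * exp (A (z, y2)))" by (simp add: u1_def fun_eq_iff)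
      moreover have "1 * exp (A (y1, y2)) + exp (A (y1, y2)) * A1 * y1 = exp Av + y1 * (exp Av * A1)"
        by (simp add: Avy algebra_simps)
      ultimately show ?thesis by (metis (no_types, lifting) DERIV_cong)
    qed
    have du12: "((\<lambda>z. u1 (y1, z)) has_field_derivative y1 * (exp Av * A2)) (at y2)"
    proof -
      have "((\<lambda>z. exp (A (y1, z))) has_field_derivative exp (A (y1, y2)) * A2) (at y2)"
        by (rule DERIV_chain2[OF DERIV_exp dA2])
      from DERIV_mult[OF DERIV_const[of y1] this]
      have "((\<lambda>z. y1 * exp (A (y1, z))) has_field_derivative 0 * exp (A (y1, y2)) + exp (A (y1, y2)) * A2 * y1) (at y2)" .
      moreover have "(\<lambda>z. u1 (y1, z)) = (\<lambda>z. y1 * exp (A (y1, z)))" by (simp add: u1_def fun_eq_iff)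
      moreover have "0 * exp (A (y1, y2)) + exp (A (y1, y2)) * A2 * y1 = y1 * (exp Av * A2)"
        by (simp add: Avy algebra_simps)
      ultimately show ?thesis by (metis (no_types, lifting) DERIV_cong)
    qed
    have du21: "((\<lambda>z. u2 (z, y2)) has_field_derivative w1 * exp (- Av) - wv * (exp (- Av) * A1)) (at y1)"
    proof -
      have "((\<lambda>z. exp (- A (z, y2))) has_field_derivative exp (- A (y1, y2)) * (- A1)) (at y1)"
        by (rule DERIV_chain2[OF DERIV_exp DERIV_minus[OF dA1]])
      from DERIV_mult[OF dw1 this]
      have "((\<lambda>z. w (z, y2) * exp (- A (z, y2))) has_field_derivative w1 * exp (- A (y1, y2)) + exp (- A (y1, y2)) * (- A1) * w (y1, y2)) (at y1)" .
      moreover have "(\<lambda>z. u2 (z, y2)) = (\<lambda>z. w (z, y2) * exp (- A (z, y2)))" by (simp add: u2_def fun_eq_iff)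
      moreover have "w1 * exp (- A (y1, y2)) + exp (- A (y1, y2)) * (- A1) * w (y1, y2) = w1 * exp (- Av) - wv * (exp (- Av) * A1)"
        by (simp add: Avy wvy algebra_simps)
      ultimately show ?thesis by (metis (no_types, lifting) DERIV_cong)
    qed
    have du22: "((\<lambda>z. u2 (y1, z)) has_field_derivative (1 + w2) * exp (- Av) - wv * (exp (- Av) * A2)) (at y2)"
    proof -
      have "((\<lambda>z. exp (- A (y1, z))) has_field_derivative exp (- A (y1, y2)) * (- A2)) (at y2)"
        by (rule DERIV_chain2[OF DERIV_exp DERIV_minus[OF dA2]])
      from DERIV_mult[OF dw2 this]
      have "((\<lambda>z. w (y1, z) * exp (- A (y1, z))) has_field_derivative (1 + w2) * exp (- A (y1, y2)) + exp (- A (y1, y2)) * (- A2) * w (y1, y2)) (at y2)" .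
      moreover have "(\<lambda>z. u2 (y1, z)) = (\<lambda>z. w (y1, z) * exp (- A (y1, z)))" by (simp add: u2_def fun_eq_iff)
      moreover have "(1 + w2) * exp (- A (y1, y2)) + exp (- A (y1, y2)) * (- A2) * w (y1, y2) = (1 + w2) * exp (- Av) - wv * (exp (- Av) * A2)"
        by (simp add: Avy wvy algebra_simps)
      ultimately show ?thesis by (metis (no_types, lifting) DERIV_cong)
    qed
    have D11: "D1 u1 y = exp Av + y1 * (exp Av * A1)" using du11 by (simp add: D1_def y DERIV_imp_deriv)
    have D12: "D2 u1 y = y1 * (exp Av * A2)" using du12 by (simp add: D2_def y DERIV_imp_deriv)
    have D21: "D1 u2 y = w1 * exp (- Av) - wv * (exp (- Av) * A1)" using du21 by (simp add: D1_def y DERIV_imp_deriv)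
    have D22: "D2 u2 y = (1 + w2) * exp (- Av) - wv * (exp (- Av) * A2)" using du22 by (simp add: D2_def y DERIV_imp_deriv)
    have "D1 u1 y * D2 u2 y - D2 u1 y * D1 u2 y = (1 + w2) * (1 + y1 * a1)"
      unfolding D11 D12 D21 D22 A1_def A2_def by (rule det_alg)
    also have "\<dots> = 1"
    proof -
      have w2E: "w2 = E2 * y1" by (simp add: w2_def E2_def)
      have "a1 = (0 - E2) / (1 + y1 * E2)" using a1 by (simp add: a1_def)
      then have h: "a1 * (1 + y1 * E2) = - E2" using denq by (simp add: field_simps)
      have "(1 + w2) * (1 + y1 * a1) = 1 + E2 * y1 + y1 * (a1 * (1 + y1 * E2))"
        unfolding w2E by (simp add: algebra_simps)
      also have "\<dots> = 1" unfolding h by (simp add: algebra_simps)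
      finally show ?thesis .
    qed
    finally show ?thesis using Hid by simp
  qed
  have det0u: "D1 u1 0 * D2 u2 0 - D2 u1 0 * D1 u2 0 \<noteq> 0" using key[OF W0] by simp
  obtain U' V' h where U': "open U'" "U' \<subseteq> W" "0 \<in> U'" and "open V'" "(u1 0, u2 0) \<in> V'"
    and homu: "homeomorphism U' V' (\<lambda>q. (u1 q, u2 q)) h"
    and "\<And>y. y \<in> V' \<Longrightarrow> D1 u1 (h y) * D2 u2 (h y) - D2 u1 (h y) * D1 u2 (h y) \<noteq> 0"
    and "\<And>y. y \<in> V' \<Longrightarrow> (h has_derivative
        (let a = D1 u1 (h y); b = D2 u1 (h y); c = D1 u2 (h y); d = D2 u2 (h y); \<Delta> = a*d - b*c
         in Lm (d/\<Delta>) (-(b/\<Delta>)) (-(c/\<Delta>)) (a/\<Delta>))) (at y)"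
    using sh_ift[OF shu1 shu2 W0 det0u] by blast
  have inj: "inj_on (\<lambda>q. (u1 q, u2 q)) U'"
    by (rule inj_on_inverseI[where g = h]) (use homu in \<open>simp add: homeomorphism_def\<close>)
  show ?thesis
  proof (intro exI conjI)
    show "0 \<in> U'" by (rule U'(3))
    show "symplectic_chart (\<lambda>q. (u1 q, u2 q)) U'"
      unfolding symplectic_chart_def
    proof (intro conjI ballI)
      show "open U'" by (rule U'(1))
      show "inj_on (\<lambda>q. (u1 q, u2 q)) U'" by (rule inj)
      fix z assume "z \<in> U'"
      then have zW: "z \<in> W" using U'(2) by blast
      show "\<exists>a b c d. ((\<lambda>q. (u1 q, u2 q)) has_derivative (\<lambda>(x, y). (a * x + b * y, c * x + d * y))) (at z)
              \<and> a * d - b * c = 1"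
      proof (intro exI conjI)
        show "((\<lambda>q. (u1 q, u2 q)) has_derivative (\<lambda>(x, y). (D1 u1 z * x + D2 u1 z * y, D1 u2 z * x + D2 u2 z * y))) (at z)"
          using sh_pair_has_derivative[OF shu1 shu2 zW] unfolding Lm_case .
        show "D1 u1 z * D2 u2 z - D2 u1 z * D1 u2 z = 1" using key[OF zW] by simp
      qed
    qed
    show "\<forall>y\<in>U'. H y = G (fst (u1 y, u2 y) * snd (u1 y, u2 y))"
    proof
      fix y assume "y \<in> U'"
      then have "y \<in> W" using U'(2) by blast
      then show "H y = G (fst (u1 y, u2 y) * snd (u1 y, u2 y))" using key by simp
    qed
  qed
qed

theorem mainTheorem8:
  fixes H :: "complex \<times> complex \<Rightarrow> complex"
    and G :: "complex \<Rightarrow> complex"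
    and \<Delta> :: "complex \<times> complex \<Rightarrow> complex"
    and lam :: complex
    and i :: nat
  assumes i: "i \<in> {1, 2}"
    and G_an: "G analytic_on {0}"
    and G0: "G 0 = 0"
    and G1: "deriv G 0 = lam"
    and lam: "lam \<noteq> 0"
    and D_an: "analytic_germ2 \<Delta>"
    and H_form: "\<exists>r>0. \<forall>y\<in>ball 0 r.
        H y = G (fst y * snd y)
              + (if i = 1 then fst y else snd y)
                * \<Delta> (if i = 1 then fst y else snd y, fst y * snd y)"
  shows "\<exists>U u. 0 \<in> U \<and> symplectic_chart u U \<and>
           (\<forall>y\<in>U. H y = G (fst (u y) * snd (u y)))"
proof -
  have G1': "deriv G 0 \<noteq> 0" using G1 lam by simp
  from i have "i = 1 \<or> i = 2" by auto
  then show ?thesis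
  proof
    assume i1: "i = 1"
    have "\<exists>r>0. \<forall>y\<in>ball 0 r. H y = G (fst y * snd y) + fst y * \<Delta> (fst y, fst y * snd y)"
      using H_form i1 by simp
    then show ?thesis by (rule main1[OF G_an G0 G1' D_an])
  next
    assume i2: "i = 2"
    obtain r where r: "r > 0" and Hr: "\<And>y. y \<in> ball 0 r \<Longrightarrow> H y = G (fst y * snd y) + snd y * \<Delta> (snd y, fst y * snd y)"
      using H_form i2 by auto
    define H' where "H' y = H (snd y, fst y)" for y
    have nsw: "norm (snd y, fst y) = norm y" for y :: "complex \<times> complex"
    proof -
      obtain a b where "y = (a, b)" by (cases y)
      then show ?thesis by (simp add: norm_Pair add.commute)
    qed
    have "\<forall>y\<in>ball 0 r. H' y = G (fst y * snd y) + fst y * \<Delta> (fst y, fst y * snd y)"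
    proof
      fix y :: "complex \<times> complex" assume "y \<in> ball 0 r"
      then have "(snd y, fst y) \<in> ball 0 r" using nsw[of y] by simp
      from Hr[OF this] show "H' y = G (fst y * snd y) + fst y * \<Delta> (fst y, fst y * snd y)"
        by (simp add: H'_def mult.commute)
    qed
    then have "\<exists>r>0. \<forall>y\<in>ball 0 r. H' y = G (fst y * snd y) + fst y * \<Delta> (fst y, fst y * snd y)"
      using r by blast
    from main1[OF G_an G0 G1' D_an this]
    obtain U u where U: "0 \<in> U" "symplectic_chart u U" "\<forall>y\<in>U. H' y = G (fst (u y) * snd (u y))"
      by blast
    define sw where "sw y = (snd y, fst y)" for y :: "complex \<times> complex"
    have swsw: "sw (sw y) = y" for y by (simp add: sw_def)
    define U2 where "U2 = sw -` U"
    define u' where "u' y = sw (u (sw y))" for y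
    have swd: "(sw has_derivative sw) (at z)" for z
    proof -
      have "((\<lambda>y. (snd y, fst y)) has_derivative (\<lambda>y. (snd y, fst y))) (at z)"
        by (intro has_derivative_Pair has_derivative_snd has_derivative_fst has_derivative_ident)
      then show ?thesis by (simp add: sw_def[abs_def])
    qed
    have oU: "open U" and injU: "inj_on u U"
      and dU: "\<And>z. z \<in> U \<Longrightarrow> \<exists>a b c d. (u has_derivative (\<lambda>(x, y). (a * x + b * y, c * x + d * y))) (at z) \<and> a * d - b * c = 1"
      using U(2) unfolding symplectic_chart_def by blast+
    show ?thesis
    proof (intro exI conjI)
      show "0 \<in> U2" using U(1) by (simp add: U2_def sw_def zero_prod_def)
      show "symplectic_chart u' U2"
        unfolding symplectic_chart_def
      proof (intro conjI ballI)
        show "open U2" unfolding U2_def sw_def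
          by (rule continuous_open_vimage[OF oU]) (auto intro!: continuous_intros)
        show "inj_on u' U2"
        proof (rule inj_onI)
          fix x y assume "x \<in> U2" "y \<in> U2" "u' x = u' y"
          then have "sw x \<in> U" "sw y \<in> U" "u (sw x) = u (sw y)"
            by (auto simp: U2_def u'_def) (metis swsw)
          then have "sw x = sw y" using injU by (meson inj_onD)
          then show "x = y" by (metis swsw)
        qed
        fix z assume "z \<in> U2"
        then have "sw z \<in> U" by (simp add: U2_def)
        then obtain a b c d where du: "(u has_derivative (\<lambda>(x, y). (a * x + b * y, c * x + d * y))) (at (sw z))"
          and det: "a * d - b * c = 1" using dU by blast
        have "(u' has_derivative (\<lambda>v. sw ((\<lambda>(x, y). (a * x + b * y, c * x + d * y)) (sw v)))) (at z)"
          unfolding u'_def[abs_def]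
          by (rule has_derivative_compose[OF has_derivative_compose[OF swd du] swd])
        moreover have "(\<lambda>v. sw ((\<lambda>(x, y). (a * x + b * y, c * x + d * y)) (sw v)))
            = (\<lambda>(x, y). (d * x + c * y, b * x + a * y))"
          by (auto simp: sw_def fun_eq_iff algebra_simps)
        ultimately have "(u' has_derivative (\<lambda>(x, y). (d * x + c * y, b * x + a * y))) (at z)" by simp
        moreover have "d * a - c * b = 1" using det by (simp add: algebra_simps)
        ultimately show "\<exists>a b c d. (u' has_derivative (\<lambda>(x, y). (a * x + b * y, c * x + d * y))) (at z) \<and> a * d - b * c = 1"
          by blast
      qed
      show "\<forall>y\<in>U2. H y = G (fst (u' y) * snd (u' y))"
      proof
        fix y assume "y \<in> U2"
        then have "sw y \<in> U" by (simp add: U2_def)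
        then have "H' (sw y) = G (fst (u (sw y)) * snd (u (sw y)))" using U(3) by blast
        moreover have "H' (sw y) = H y" by (simp add: H'_def sw_def)
        ultimately show "H y = G (fst (u' y) * snd (u' y))" by (simp add: u'_def sw_def mult.commute)
      qed
    qed
  qed
qed

end
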